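(* Let $G$ and $H$ be connected graphs, each with at least $2$ vertices, neither of which contains a pair of true twins. Then the strong product $G\boxtimes H$ is $1$-perfectly orientable if and only if one of $G$, $H$ is isomorphic to $P_3$ and the other is isomorphic to $R_n$ for some $n\ge 1$ or to $R_n\ast K_1$ for some $n\ge 0$.
   Context: All graphs are finite and simple. An orientation of a graph $G$ is $1$-perfect if the out-neighborhood of every vertex induces a clique in $G$; $G$ is $1$-perfectly orientable if it admits a $1$-perfect orientation. Two distinct vertices $u,v$ are true twins if $N[u]=N[v]$ (closed neighborhoods). The strong product $G\boxtimes H$ has vertex set $V(G)\times V(H)$, with distinct $(u,v),(u',v')$ adjacent iff $u'\in N_G[u]$ and $v'\in N_H[v]$. $P_3$ is the path on $3$ vertices. For an integer $n\ge 0$, the raft $R_n$ is the graph with vertex set $X\cup Y$, where $X=\{x_0,\dots,x_n\}$ and $Y=\{y_0,\dots,y_n\}$ are disjoint cliques, and, for $0\le i,j\le n$, $x_i$ is adjacent to $y_j$ iff $i+j\ge n+1$ (no other edges). $R_n\ast K_1$ is $R_n$ with an added vertex adjacent to all vertices of $R_n$. *)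

theory Defs
  imports Main
begin

definition graph :: "'a set \<Rightarrow> ('a \<Rightarrow> 'a \<Rightarrow> bool) \<Rightarrow> bool" where
  "graph V E \<longleftrightarrow> finite V \<and> (\<forall>u v. E u v \<longrightarrow> u \<in> V \<and> v \<in> V)
     \<and> (\<forall>u v. E u v \<longrightarrow> E v u) \<and> (\<forall>v. \<not> E v v)"

definition connected_graph :: "'a set \<Rightarrow> ('a \<Rightarrow> 'a \<Rightarrow> bool) \<Rightarrow> bool" where
  "connected_graph V E \<longleftrightarrow> V \<noteq> {} \<and> (\<forall>u\<in>V. \<forall>v\<in>V. E\<^sup>*\<^sup>* u v)"

definition closed_nbhd :: "'a set \<Rightarrow> ('a \<Rightarrow> 'a \<Rightarrow> bool) \<Rightarrow> 'a \<Rightarrow> 'a set" where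
  "closed_nbhd V E u = {w \<in> V. w = u \<or> E u w}"

definition has_true_twins :: "'a set \<Rightarrow> ('a \<Rightarrow> 'a \<Rightarrow> bool) \<Rightarrow> bool" where
  "has_true_twins V E \<longleftrightarrow>
     (\<exists>u\<in>V. \<exists>v\<in>V. u \<noteq> v \<and> closed_nbhd V E u = closed_nbhd V E v)"

definition orientation :: "('a \<Rightarrow> 'a \<Rightarrow> bool) \<Rightarrow> ('a \<Rightarrow> 'a \<Rightarrow> bool) \<Rightarrow> bool" where
  "orientation E D \<longleftrightarrow> (\<forall>u v. E u v \<longrightarrow> D u v \<or> D v u)
     \<and> (\<forall>u v. D u v \<longrightarrow> E u v \<and> \<not> D v u)"

definition one_perfect_orientation ::
  "('a \<Rightarrow> 'a \<Rightarrow> bool) \<Rightarrow> ('a \<Rightarrow> 'a \<Rightarrow> bool) \<Rightarrow> bool" where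
  "one_perfect_orientation E D \<longleftrightarrow> orientation E D
     \<and> (\<forall>v x y. D v x \<and> D v y \<and> x \<noteq> y \<longrightarrow> E x y)"

definition one_perfectly_orientable :: "('a \<Rightarrow> 'a \<Rightarrow> bool) \<Rightarrow> bool" where
  "one_perfectly_orientable E \<longleftrightarrow> (\<exists>D. one_perfect_orientation E D)"

definition strong_prod_E :: "'a set \<Rightarrow> ('a \<Rightarrow> 'a \<Rightarrow> bool) \<Rightarrow> 'b set \<Rightarrow> ('b \<Rightarrow> 'b \<Rightarrow> bool)
    \<Rightarrow> ('a \<times> 'b) \<Rightarrow> ('a \<times> 'b) \<Rightarrow> bool" where
  "strong_prod_E VG EG VH EH p q \<longleftrightarrow>
     p \<in> VG \<times> VH \<and> q \<in> VG \<times> VH \<and> p \<noteq> q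
     \<and> (fst p = fst q \<or> EG (fst p) (fst q)) \<and> (snd p = snd q \<or> EH (snd p) (snd q))"

definition graph_iso :: "'a set \<Rightarrow> ('a \<Rightarrow> 'a \<Rightarrow> bool) \<Rightarrow> 'b set \<Rightarrow> ('b \<Rightarrow> 'b \<Rightarrow> bool) \<Rightarrow> bool" where
  "graph_iso V1 E1 V2 E2 \<longleftrightarrow>
     (\<exists>f. bij_betw f V1 V2 \<and> (\<forall>u\<in>V1. \<forall>v\<in>V1. E1 u v \<longleftrightarrow> E2 (f u) (f v)))"

definition P3_V :: "nat set" where "P3_V = {0, 1, 2}"
definition P3_E :: "nat \<Rightarrow> nat \<Rightarrow> bool" where
  "P3_E u v \<longleftrightarrow> {u, v} = {0, 1} \<or> {u, v} = {1, 2}"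

text \<open>The raft R_n: (False, i) is x_i, (True, j) is y_j, for 0 \<le> i, j \<le> n.\<close>
definition raft_V :: "nat \<Rightarrow> (bool \<times> nat) set" where
  "raft_V n = UNIV \<times> {0..n}"

definition raft_E :: "nat \<Rightarrow> (bool \<times> nat) \<Rightarrow> (bool \<times> nat) \<Rightarrow> bool" where
  "raft_E n p q \<longleftrightarrow> p \<in> raft_V n \<and> q \<in> raft_V n \<and> p \<noteq> q \<and>
     (fst p = fst q \<or> snd p + snd q \<ge> n + 1)"

text \<open>R_n * K_1: the extra universal vertex is None.\<close>
definition raftK1_V :: "nat \<Rightarrow> (bool \<times> nat) option set" where
  "raftK1_V n = insert None (Some ` raft_V n)"

definition raftK1_E :: "nat \<Rightarrow> (bool \<times> nat) option \<Rightarrow> (bool \<times> nat) option \<Rightarrow> bool" where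
  "raftK1_E n p q \<longleftrightarrow> p \<in> raftK1_V n \<and> q \<in> raftK1_V n \<and> p \<noteq> q \<and>
     (p = None \<or> q = None \<or> raft_E n (the p) (the q))"

end

theory Submission
  imports Defs
begin

lemma opo_transfer:
  assumes O: "one_perfect_orientation E' D'" and inj: "inj_on \<phi> V"
    and dom: "\<And>p q. E p q \<Longrightarrow> p \<in> V \<and> q \<in> V"
    and eq: "\<And>p q. p \<in> V \<Longrightarrow> q \<in> V \<Longrightarrow> E p q \<longleftrightarrow> E' (\<phi> p) (\<phi> q)"
  shows "one_perfectly_orientable E"
proof -
  define D where "D p q \<longleftrightarrow> E p q \<and> D' (\<phi> p) (\<phi> q)" for p q
  have o1: "\<And>u v. E' u v \<Longrightarrow> D' u v \<or> D' v u" and o2: "\<And>u v. D' u v \<Longrightarrow> E' u v \<and> \<not> D' v u"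
    and o3: "\<And>v x y. D' v x \<Longrightarrow> D' v y \<Longrightarrow> x \<noteq> y \<Longrightarrow> E' x y"
    using O unfolding one_perfect_orientation_def orientation_def by blast+
  have A1: "D u v \<or> D v u" if "E u v" for u v
  proof -
    from that have uv: "u \<in> V" "v \<in> V" using dom by auto
    with \<open>E u v\<close> have "E' (\<phi> u) (\<phi> v)" using eq by auto
    then show "D u v \<or> D v u" unfolding D_def using o1 o2 eq uv \<open>E u v\<close> by blast
  qed
  have A2: "E u v \<and> \<not> D v u" if "D u v" for u v using that unfolding D_def using o2 by blast
  have A3: "E x y" if a: "D v x \<and> D v y \<and> x \<noteq> y" for v x y
  proof -
    from a have "x \<in> V" "y \<in> V" unfolding D_def using dom by auto
    then have "\<phi> x \<noteq> \<phi> y" using a inj by (auto dest: inj_onD)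
    then have "E' (\<phi> x) (\<phi> y)" using o3 a unfolding D_def by blast
    then show "E x y" using eq \<open>x \<in> V\<close> \<open>y \<in> V\<close> by blast
  qed
  have "one_perfect_orientation E D"
    unfolding one_perfect_orientation_def orientation_def using A1 A2 A3 by blast
  then show ?thesis unfolding one_perfectly_orientable_def by blast
qed

lemma opo_swap:
  assumes "one_perfectly_orientable (strong_prod_E VH EH VG EG)"
  shows "one_perfectly_orientable (strong_prod_E VG EG VH EH)"
proof -
  obtain D' where O: "one_perfect_orientation (strong_prod_E VH EH VG EG) D'"
    using assms unfolding one_perfectly_orientable_def by blast
  show ?thesis
    by (rule opo_transfer[OF O, of "\<lambda>(a,b). (b,a)" "VG \<times> VH"])
       (auto simp: inj_on_def strong_prod_E_def)
qed

lemma opo_iso: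
  assumes "one_perfectly_orientable (strong_prod_E VG' EG' VH' EH')"
    and "graph_iso VG EG VG' EG'" and "graph_iso VH EH VH' EH'"
  shows "one_perfectly_orientable (strong_prod_E VG EG VH EH)"
proof -
  obtain D' where O: "one_perfect_orientation (strong_prod_E VG' EG' VH' EH') D'"
    using assms unfolding one_perfectly_orientable_def by blast
  obtain f where f: "bij_betw f VG VG'" "\<And>u v. u\<in>VG \<Longrightarrow> v\<in>VG \<Longrightarrow> EG u v \<longleftrightarrow> EG' (f u) (f v)"
    using assms(2) unfolding graph_iso_def by blast
  obtain h where h: "bij_betw h VH VH'" "\<And>u v. u\<in>VH \<Longrightarrow> v\<in>VH \<Longrightarrow> EH u v \<longleftrightarrow> EH' (h u) (h v)"
    using assms(3) unfolding graph_iso_def by blast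
  have fi: "inj_on f VG" "f ` VG = VG'" and hi: "inj_on h VH" "h ` VH = VH'"
    using f(1) h(1) by (auto simp: bij_betw_def)
  show ?thesis
  proof (rule opo_transfer[OF O, of "\<lambda>(a,b). (f a, h b)" "VG \<times> VH"])
    show "inj_on (\<lambda>(a, b). (f a, h b)) (VG \<times> VH)"
      using fi(1) hi(1) by (auto simp: inj_on_def)
  next
    fix p q show "strong_prod_E VG EG VH EH p q \<Longrightarrow> p \<in> VG \<times> VH \<and> q \<in> VG \<times> VH"
      by (auto simp: strong_prod_E_def)
  next
    fix p q assume pq: "p \<in> VG \<times> VH" "q \<in> VG \<times> VH"
    obtain a b c d where p: "p = (a,b)" and q: "q = (c,d)" by fastforce
    have m: "a \<in> VG" "b \<in> VH" "c \<in> VG" "d \<in> VH" using pq p q by auto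
    have "f a = f c \<longleftrightarrow> a = c" "h b = h d \<longleftrightarrow> b = d" using m fi(1) hi(1) by (auto dest: inj_onD)
    moreover have "f a \<in> VG'" "f c \<in> VG'" "h b \<in> VH'" "h d \<in> VH'" using m fi hi by auto
    ultimately show "strong_prod_E VG EG VH EH p q \<longleftrightarrow> strong_prod_E VG' EG' VH' EH' ((\<lambda>(a, b). (f a, h b)) p) ((\<lambda>(a, b). (f a, h b)) q)"
      using m f(2) h(2) unfolding p q strong_prod_E_def by auto
  qed
qed

lemma cover_opo:
  assumes sym: "\<And>u v. E u v \<Longrightarrow> E v u" and irr: "\<And>u. \<not> E u u"
    and cov: "\<And>u v. E u v \<Longrightarrow> v \<in> C u \<or> u \<in> C v"
    and cl: "\<And>u x y. x \<in> C u \<Longrightarrow> y \<in> C u \<Longrightarrow> E u x \<Longrightarrow> E u y \<Longrightarrow> x \<noteq> y \<Longrightarrow> E x y"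
  shows "one_perfectly_orientable E"
proof -
  obtain r :: "'a rel" where r: "Well_order r" "Field r = UNIV" using well_ordering[where 'a='a] by (elim exE conjE)
  have "Linear_order r" using r(1) by (simp add: well_order_on_def)
  then have t: "total_on UNIV r" and a: "antisym r" using r(2)
    by (simp_all add: linear_order_on_def partial_order_on_def)
  have tot: "\<And>u v. u \<noteq> v \<Longrightarrow> (u,v) \<in> r \<or> (v,u) \<in> r" using t by (simp add: total_on_def)
  have asym: "\<And>u v. u \<noteq> v \<Longrightarrow> (u,v) \<in> r \<Longrightarrow> (v,u) \<notin> r" using a by (auto simp: antisym_def)
  define D where "D u v \<longleftrightarrow> E u v \<and> v \<in> C u \<and> (u \<in> C v \<longrightarrow> (u,v) \<in> r)" for u v
  have A1: "D u v \<or> D v u" if e: "E u v" for u v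
  proof -
    from e have "u \<noteq> v" using irr by auto
    have e': "E v u" using sym e .
    show "D u v \<or> D v u"
    proof (cases "v \<in> C u")
      case True
      show ?thesis
      proof (cases "u \<in> C v")
        case True2: True
        then show ?thesis using True tot[OF \<open>u \<noteq> v\<close>] e e' unfolding D_def by auto
      next
        case False
        then show ?thesis using True e unfolding D_def by auto
      qed
    next
      case False
      then have "u \<in> C v" using cov[OF e] by auto
      then show ?thesis using False e' unfolding D_def by auto
    qed
  qed
  have A2: "E u v \<and> \<not> D v u" if "D u v" for u v
  proof -
    from that have "E u v" "v \<in> C u" "u \<in> C v \<longrightarrow> (u,v) \<in> r" unfolding D_def by auto
    moreover have "u \<noteq> v" using \<open>E u v\<close> irr by auto
    ultimately have h: "E u v" "v \<in> C u" "u \<in> C v \<longrightarrow> (u,v) \<in> r" "u \<noteq> v" by auto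
    have "\<not> D v u"
    proof
      assume "D v u"
      then have "u \<in> C v" "(v,u) \<in> r" using h(2) unfolding D_def by auto
      then have "(u,v) \<in> r" using h(3) by blast
      then show False using asym[OF h(4)] \<open>(v,u) \<in> r\<close> by blast
    qed
    then show "E u v \<and> \<not> D v u" using h by blast
  qed
  have A3: "E x y" if "D v x \<and> D v y \<and> x \<noteq> y" for v x y
    using that cl unfolding D_def by blast
  have "one_perfect_orientation E D"
    unfolding one_perfect_orientation_def orientation_def using A1 A2 A3 by blast
  then show ?thesis unfolding one_perfectly_orientable_def by blast
qed


lemma P3_chain_opo:
  fixes V :: "'b set" and E and X Y :: "'b set" and r :: "'b \<Rightarrow> nat" and N :: nat
  assumes g: "graph V E" and VXY: "V = X \<union> Y" and disj: "X \<inter> Y = {}"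
    and cX: "\<And>x x'. x \<in> X \<Longrightarrow> x' \<in> X \<Longrightarrow> x \<noteq> x' \<Longrightarrow> E x x'"
    and cY: "\<And>y y'. y \<in> Y \<Longrightarrow> y' \<in> Y \<Longrightarrow> y \<noteq> y' \<Longrightarrow> E y y'"
    and cr: "\<And>x y. x \<in> X \<Longrightarrow> y \<in> Y \<Longrightarrow> E x y \<longleftrightarrow> N \<le> r x + r y"
  shows "one_perfectly_orientable (strong_prod_E P3_V P3_E V E)"
proof -
  have sym: "\<And>u v. E u v \<Longrightarrow> E v u" and irr: "\<And>v. \<not> E v v" and dom: "\<And>u v. E u v \<Longrightarrow> u \<in> V \<and> v \<in> V"
    using g unfolding graph_def by blast+
  define up where "up v = {w \<in> V. ((w \<in> X \<longleftrightarrow> v \<in> X) \<and> r v \<le> r w) \<or> ((w \<in> X \<longleftrightarrow> v \<notin> X) \<and> N \<le> r v + r w)}" for v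
  define C2 where "C2 c v = (if c = (0::nat) then (if v \<in> X then up v else Y)
                          else if c = 1 then up v else (if v \<in> Y then up v else X))" for c v
  define C1 where "C1 c v = (if c = (0::nat) then {0,1} else if c = 2 then {1,2}
                          else if v \<in> X then {0,1} else {1,2::nat})" for c v
  define C where "C p = {q. fst q \<in> C1 (fst p) (snd p) \<and> snd q \<in> C2 (fst p) (snd p)}" for p
  have adjV: "\<And>v w. v \<in> V \<Longrightarrow> w \<in> V \<Longrightarrow> v \<noteq> w \<Longrightarrow> E v w \<longleftrightarrow>
      ((v \<in> X \<longleftrightarrow> w \<in> X) \<or> N \<le> r v + r w)"
    using VXY disj cX cY cr sym by (smt (verit) IntI Un_iff add.commute empty_iff)
  have P3E: "\<And>a b. P3_E a b \<longleftrightarrow> (a = 0 \<and> b = 1) \<or> (a = 1 \<and> b = 0) \<or> (a = 1 \<and> b = 2) \<or> (a = 2 \<and> b = 1)"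
    unfolding P3_E_def by (auto simp: doubleton_eq_iff)
  let ?E = "strong_prod_E P3_V P3_E V E"
  show ?thesis
  proof (rule cover_opo[where C = C])
    show "\<And>u v. ?E u v \<Longrightarrow> ?E v u" unfolding strong_prod_E_def P3E using sym by auto
    show "\<And>u. \<not> ?E u u" unfolding strong_prod_E_def by auto
  next
    fix u v assume e: "?E u v"
    obtain c a c' b where u: "u = (c,a)" and v: "v = (c',b)" by fastforce
    have m: "a \<in> V" "b \<in> V" "c \<in> {0,1,2}" "c' \<in> {0,1,2}" using e unfolding u v strong_prod_E_def P3_V_def by auto
    have ab: "a = b \<or> E a b" and cc: "c = c' \<or> P3_E c c'" and ne: "u \<noteq> v" using e unfolding u v strong_prod_E_def by auto
    have ab: "a = b \<or> E a b" and cc: "c = c' \<or> P3_E c c'" and ne: "u \<noteq> v" using e unfolding u v strong_prod_E_def by auto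
    have rX: "a \<in> X \<or> a \<in> Y" "b \<in> X \<or> b \<in> Y" using m VXY by auto
    have rX2: "a \<in> Y \<longleftrightarrow> a \<notin> X" "b \<in> Y \<longleftrightarrow> b \<notin> X" using m VXY disj by auto
    have upself: "\<And>z. z \<in> V \<Longrightarrow> z \<in> up z" unfolding up_def by auto
    have uptot: "b \<in> up a \<or> a \<in> up b" if "a \<noteq> b" "E a b"
      using adjV[OF m(1,2) that(1)] that m unfolding up_def by (auto simp: add.commute)
    have upcross: "b \<in> up a \<and> a \<in> up b" if "E a b" "(a \<in> X) \<noteq> (b \<in> X)"
      using adjV[OF m(1,2)] that m irr unfolding up_def by (auto simp: add.commute)
    have vC: "v \<in> C u \<longleftrightarrow> c' \<in> C1 c a \<and> b \<in> C2 c a" and uC: "u \<in> C v \<longleftrightarrow> c \<in> C1 c' b \<and> a \<in> C2 c' b"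
      unfolding u v C_def by auto
    have c3: "c = 0 \<or> c = 1 \<or> c = 2" "c' = 0 \<or> c' = 1 \<or> c' = 2" using m by auto
    show "v \<in> C u \<or> u \<in> C v"
    proof (cases "a = b")
      case True
      then have "c \<noteq> c'" using ne u v by auto
      then have "P3_E c c'" using cc by auto
      then show ?thesis unfolding vC uC C1_def C2_def P3E using True upself m rX rX2 by auto
    next
      case False
      then have Eab: "E a b" using ab by auto
      show ?thesis
      proof (cases "(a \<in> X) = (b \<in> X)")
        case True
        then have "b \<in> up a \<or> a \<in> up b" using uptot False Eab by auto
        then show ?thesis using cc c3 True rX2 unfolding vC uC C1_def C2_def P3E by auto
      next
        case F2: False
        then have "b \<in> up a \<and> a \<in> up b" using upcross Eab by auto
        then show ?thesis using cc c3 F2 rX2 unfolding vC uC C1_def C2_def P3E by auto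
      qed
    qed
  next
    fix u x y assume a: "x \<in> C u" "y \<in> C u" "?E u x" "?E u y" "x \<noteq> y"
    obtain c a0 where u: "u = (c,a0)" by fastforce
    obtain c1 w1 where x: "x = (c1,w1)" by fastforce
    obtain c2 w2 where y: "y = (c2,w2)" by fastforce
    have m: "w1 \<in> V" "w2 \<in> V" "c1 \<in> P3_V" "c2 \<in> P3_V" "a0 \<in> V" "c \<in> P3_V"
      using a unfolding u x y strong_prod_E_def by auto
    have c12: "c1 = c2 \<or> P3_E c1 c2"
      using a(1,2) unfolding u x y C_def C1_def P3E by (auto split: if_splits)
    have w12: "w1 = w2 \<or> E w1 w2"
    proof -
      have w: "w1 \<in> C2 c a0" "w2 \<in> C2 c a0" using a(1,2) unfolding u x y C_def by auto
      have "(w1 \<in> X \<longleftrightarrow> w2 \<in> X) \<or> N \<le> r w1 + r w2"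
        using w disj unfolding C2_def up_def by (auto split: if_splits)
      then show ?thesis using adjV m by blast
    qed
    show "?E x y" using m c12 w12 a(5) unfolding x y strong_prod_E_def by auto
  qed
qed


lemma graph_raft: "graph (raft_V n) (raft_E n)"
  unfolding graph_def raft_E_def raft_V_def by auto

lemma graph_raftK1: "graph (raftK1_V n) (raftK1_E n)"
  unfolding graph_def raftK1_E_def raftK1_V_def raft_E_def raft_V_def by auto

lemma P3_raft_opo: "one_perfectly_orientable (strong_prod_E P3_V P3_E (raft_V n) (raft_E n))"
proof (rule P3_chain_opo[OF graph_raft, where X = "{False} \<times> {0..n}" and Y = "{True} \<times> {0..n}" and r = snd and N = "n+1"])
  show "raft_V n = {False} \<times> {0..n} \<union> {True} \<times> {0..n}" unfolding raft_V_def by auto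
qed (auto simp: raft_E_def raft_V_def)

lemma P3_raftK1_opo: "one_perfectly_orientable (strong_prod_E P3_V P3_E (raftK1_V n) (raftK1_E n))"
proof (rule P3_chain_opo[OF graph_raftK1, where X = "insert None (Some ` ({False} \<times> {0..n}))"
      and Y = "Some ` ({True} \<times> {0..n})" and r = "\<lambda>q. case q of None \<Rightarrow> n+1 | Some p \<Rightarrow> snd p" and N = "n+1"])
  show "raftK1_V n = insert None (Some ` ({False} \<times> {0..n})) \<union> Some ` ({True} \<times> {0..n})"
    unfolding raftK1_V_def raft_V_def by auto
qed (auto simp: raftK1_E_def raftK1_V_def raft_E_def raft_V_def)


lemma obs_claw:
  assumes G: "graph VG EG" and H: "graph VH EH"
    and O: "one_perfect_orientation (strong_prod_E VG EG VH EH) D"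
    and A: "a0 \<in> VG" "a1 \<in> VG" "a2 \<in> VG" "EG a0 a1" "\<not> EG a0 a2" "a0 \<noteq> a2" "EG a1 a2"
    and B: "b0 \<in> VH" "b1 \<in> VH" "b2 \<in> VH" "b3 \<in> VH" "EH b0 b1" "EH b0 b2" "EH b0 b3" "\<not> EH b1 b2" "b1 \<noteq> b2" "\<not> EH b1 b3" "b1 \<noteq> b3" "\<not> EH b2 b3" "b2 \<noteq> b3"
  shows False
proof -
  have tot: "\<And>u v. strong_prod_E VG EG VH EH u v \<Longrightarrow> D u v \<or> D v u"
    and cl: "\<And>v x y. D v x \<Longrightarrow> D v y \<Longrightarrow> x \<noteq> y \<Longrightarrow> strong_prod_E VG EG VH EH x y"
    using O unfolding one_perfect_orientation_def orientation_def by blast+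
  have GS: "\<And>u v. EG u v \<Longrightarrow> EG v u" "\<And>v. \<not> EG v v" using G unfolding graph_def by blast+
  have HS: "\<And>u v. EH u v \<Longrightarrow> EH v u" "\<And>v. \<not> EH v v" using H unfolding graph_def by blast+
  note facts = A B
  have sA: "EG a1 a0" "EG a2 a1" "a0 \<noteq> a1" "a1 \<noteq> a2" "a1 \<noteq> a0" "a2 \<noteq> a0" "a2 \<noteq> a1" "\<not> EG a2 a0" using A GS by metis+
  have sB: "EH b1 b0" "EH b2 b0" "EH b3 b0" "b0 \<noteq> b1" "b0 \<noteq> b2" "b0 \<noteq> b3" "b1 \<noteq> b0" "b2 \<noteq> b0" "b3 \<noteq> b0" "b2 \<noteq> b1" "b3 \<noteq> b1" "b3 \<noteq> b2" "\<not> EH b2 b1" "\<not> EH b3 b1" "\<not> EH b3 b2" using B HS by metis+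
  have c0: "\<not> (D (a0,b0) (a1,b1) \<and> D (a0,b0) (a1,b2))" using cl[of "(a0,b0)" "(a1,b1)" "(a1,b2)"] A B sA sB by (auto simp: strong_prod_E_def)
  have c1: "\<not> (D (a0,b0) (a1,b1) \<and> D (a0,b0) (a1,b3))" using cl[of "(a0,b0)" "(a1,b1)" "(a1,b3)"] A B sA sB by (auto simp: strong_prod_E_def)
  have c2: "\<not> (D (a0,b0) (a1,b2) \<and> D (a0,b0) (a1,b3))" using cl[of "(a0,b0)" "(a1,b2)" "(a1,b3)"] A B sA sB by (auto simp: strong_prod_E_def)
  have c3: "\<not> (D (a1,b1) (a0,b0) \<and> D (a1,b1) (a2,b0))" using cl[of "(a1,b1)" "(a0,b0)" "(a2,b0)"] A B sA sB by (auto simp: strong_prod_E_def)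
  have c4: "\<not> (D (a1,b2) (a0,b0) \<and> D (a1,b2) (a2,b0))" using cl[of "(a1,b2)" "(a0,b0)" "(a2,b0)"] A B sA sB by (auto simp: strong_prod_E_def)
  have c5: "\<not> (D (a1,b3) (a0,b0) \<and> D (a1,b3) (a2,b0))" using cl[of "(a1,b3)" "(a0,b0)" "(a2,b0)"] A B sA sB by (auto simp: strong_prod_E_def)
  have c6: "\<not> (D (a2,b0) (a1,b1) \<and> D (a2,b0) (a1,b2))" using cl[of "(a2,b0)" "(a1,b1)" "(a1,b2)"] A B sA sB by (auto simp: strong_prod_E_def)
  have c7: "\<not> (D (a2,b0) (a1,b1) \<and> D (a2,b0) (a1,b3))" using cl[of "(a2,b0)" "(a1,b1)" "(a1,b3)"] A B sA sB by (auto simp: strong_prod_E_def)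
  have c8: "\<not> (D (a2,b0) (a1,b2) \<and> D (a2,b0) (a1,b3))" using cl[of "(a2,b0)" "(a1,b2)" "(a1,b3)"] A B sA sB by (auto simp: strong_prod_E_def)
  have e0: "D (a1,b2) (a2,b0) \<or> D (a2,b0) (a1,b2)" by (rule tot) (use A B sA sB in \<open>auto simp: strong_prod_E_def\<close>)
  have e1: "D (a0,b0) (a1,b1) \<or> D (a1,b1) (a0,b0)" by (rule tot) (use A B sA sB in \<open>auto simp: strong_prod_E_def\<close>)
  have e2: "D (a1,b3) (a2,b0) \<or> D (a2,b0) (a1,b3)" by (rule tot) (use A B sA sB in \<open>auto simp: strong_prod_E_def\<close>)
  have e3: "D (a0,b0) (a1,b3) \<or> D (a1,b3) (a0,b0)" by (rule tot) (use A B sA sB in \<open>auto simp: strong_prod_E_def\<close>)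
  have e4: "D (a1,b1) (a2,b0) \<or> D (a2,b0) (a1,b1)" by (rule tot) (use A B sA sB in \<open>auto simp: strong_prod_E_def\<close>)
  have e5: "D (a0,b0) (a1,b2) \<or> D (a1,b2) (a0,b0)" by (rule tot) (use A B sA sB in \<open>auto simp: strong_prod_E_def\<close>)
  show False using c0 c1 c2 c3 c4 c5 c6 c7 c8 e0 e1 e2 e3 e4 e5 by sat
qed

lemma obs_C4:
  assumes G: "graph VG EG" and H: "graph VH EH"
    and O: "one_perfect_orientation (strong_prod_E VG EG VH EH) D"
    and A: "a0 \<in> VG" "a1 \<in> VG" "a2 \<in> VG" "EG a0 a1" "\<not> EG a0 a2" "a0 \<noteq> a2" "EG a1 a2"
    and B: "b0 \<in> VH" "b1 \<in> VH" "b2 \<in> VH" "b3 \<in> VH" "EH b0 b1" "\<not> EH b0 b2" "b0 \<noteq> b2" "EH b0 b3" "EH b1 b2" "\<not> EH b1 b3" "b1 \<noteq> b3" "EH b2 b3"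
  shows False
proof -
  have tot: "\<And>u v. strong_prod_E VG EG VH EH u v \<Longrightarrow> D u v \<or> D v u"
    and cl: "\<And>v x y. D v x \<Longrightarrow> D v y \<Longrightarrow> x \<noteq> y \<Longrightarrow> strong_prod_E VG EG VH EH x y"
    using O unfolding one_perfect_orientation_def orientation_def by blast+
  have GS: "\<And>u v. EG u v \<Longrightarrow> EG v u" "\<And>v. \<not> EG v v" using G unfolding graph_def by blast+
  have HS: "\<And>u v. EH u v \<Longrightarrow> EH v u" "\<And>v. \<not> EH v v" using H unfolding graph_def by blast+
  note facts = A B
  have sA: "EG a1 a0" "EG a2 a1" "a0 \<noteq> a1" "a1 \<noteq> a2" "a1 \<noteq> a0" "a2 \<noteq> a0" "a2 \<noteq> a1" "\<not> EG a2 a0" using A GS by metis+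
  have sB: "EH b1 b0" "EH b3 b0" "EH b2 b1" "EH b3 b2" "b0 \<noteq> b1" "b0 \<noteq> b3" "b1 \<noteq> b2" "b2 \<noteq> b3" "b1 \<noteq> b0" "b2 \<noteq> b0" "b3 \<noteq> b0" "b2 \<noteq> b1" "b3 \<noteq> b1" "b3 \<noteq> b2" "\<not> EH b2 b0" "\<not> EH b3 b1" using B HS by metis+
  have c0: "\<not> (D (a0,b3) (a1,b0) \<and> D (a0,b3) (a1,b2))" using cl[of "(a0,b3)" "(a1,b0)" "(a1,b2)"] A B sA sB by (auto simp: strong_prod_E_def)
  have c1: "\<not> (D (a1,b0) (a0,b3) \<and> D (a1,b0) (a2,b1))" using cl[of "(a1,b0)" "(a0,b3)" "(a2,b1)"] A B sA sB by (auto simp: strong_prod_E_def)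
  have c2: "\<not> (D (a1,b0) (a0,b3) \<and> D (a1,b0) (a2,b3))" using cl[of "(a1,b0)" "(a0,b3)" "(a2,b3)"] A B sA sB by (auto simp: strong_prod_E_def)
  have c3: "\<not> (D (a1,b2) (a0,b3) \<and> D (a1,b2) (a2,b1))" using cl[of "(a1,b2)" "(a0,b3)" "(a2,b1)"] A B sA sB by (auto simp: strong_prod_E_def)
  have c4: "\<not> (D (a1,b2) (a0,b3) \<and> D (a1,b2) (a2,b3))" using cl[of "(a1,b2)" "(a0,b3)" "(a2,b3)"] A B sA sB by (auto simp: strong_prod_E_def)
  have c5: "\<not> (D (a2,b0) (a2,b1) \<and> D (a2,b0) (a2,b3))" using cl[of "(a2,b0)" "(a2,b1)" "(a2,b3)"] A B sA sB by (auto simp: strong_prod_E_def)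
  have c6: "\<not> (D (a2,b1) (a1,b0) \<and> D (a2,b1) (a2,b2))" using cl[of "(a2,b1)" "(a1,b0)" "(a2,b2)"] A B sA sB by (auto simp: strong_prod_E_def)
  have c7: "\<not> (D (a2,b1) (a1,b2) \<and> D (a2,b1) (a2,b0))" using cl[of "(a2,b1)" "(a1,b2)" "(a2,b0)"] A B sA sB by (auto simp: strong_prod_E_def)
  have c8: "\<not> (D (a2,b2) (a2,b1) \<and> D (a2,b2) (a2,b3))" using cl[of "(a2,b2)" "(a2,b1)" "(a2,b3)"] A B sA sB by (auto simp: strong_prod_E_def)
  have c9: "\<not> (D (a2,b3) (a1,b0) \<and> D (a2,b3) (a2,b2))" using cl[of "(a2,b3)" "(a1,b0)" "(a2,b2)"] A B sA sB by (auto simp: strong_prod_E_def)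
  have c10: "\<not> (D (a2,b3) (a1,b2) \<and> D (a2,b3) (a2,b0))" using cl[of "(a2,b3)" "(a1,b2)" "(a2,b0)"] A B sA sB by (auto simp: strong_prod_E_def)
  have e0: "D (a2,b0) (a2,b1) \<or> D (a2,b1) (a2,b0)" by (rule tot) (use A B sA sB in \<open>auto simp: strong_prod_E_def\<close>)
  have e1: "D (a1,b2) (a2,b1) \<or> D (a2,b1) (a1,b2)" by (rule tot) (use A B sA sB in \<open>auto simp: strong_prod_E_def\<close>)
  have e2: "D (a2,b1) (a2,b2) \<or> D (a2,b2) (a2,b1)" by (rule tot) (use A B sA sB in \<open>auto simp: strong_prod_E_def\<close>)
  have e3: "D (a1,b0) (a2,b1) \<or> D (a2,b1) (a1,b0)" by (rule tot) (use A B sA sB in \<open>auto simp: strong_prod_E_def\<close>)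
  have e4: "D (a0,b3) (a1,b0) \<or> D (a1,b0) (a0,b3)" by (rule tot) (use A B sA sB in \<open>auto simp: strong_prod_E_def\<close>)
  have e5: "D (a1,b0) (a2,b3) \<or> D (a2,b3) (a1,b0)" by (rule tot) (use A B sA sB in \<open>auto simp: strong_prod_E_def\<close>)
  have e6: "D (a1,b2) (a2,b3) \<or> D (a2,b3) (a1,b2)" by (rule tot) (use A B sA sB in \<open>auto simp: strong_prod_E_def\<close>)
  have e7: "D (a2,b2) (a2,b3) \<or> D (a2,b3) (a2,b2)" by (rule tot) (use A B sA sB in \<open>auto simp: strong_prod_E_def\<close>)
  have e8: "D (a0,b3) (a1,b2) \<or> D (a1,b2) (a0,b3)" by (rule tot) (use A B sA sB in \<open>auto simp: strong_prod_E_def\<close>)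
  have e9: "D (a2,b0) (a2,b3) \<or> D (a2,b3) (a2,b0)" by (rule tot) (use A B sA sB in \<open>auto simp: strong_prod_E_def\<close>)
  show False using c0 c1 c2 c3 c4 c5 c6 c7 c8 c9 c10 e0 e1 e2 e3 e4 e5 e6 e7 e8 e9 by sat
qed

lemma obs_bull:
  assumes G: "graph VG EG" and H: "graph VH EH"
    and O: "one_perfect_orientation (strong_prod_E VG EG VH EH) D"
    and A: "a0 \<in> VG" "a1 \<in> VG" "a2 \<in> VG" "EG a0 a1" "\<not> EG a0 a2" "a0 \<noteq> a2" "EG a1 a2"
    and B: "b0 \<in> VH" "b1 \<in> VH" "b2 \<in> VH" "b3 \<in> VH" "b4 \<in> VH" "EH b0 b1" "EH b0 b2" "EH b0 b3" "\<not> EH b0 b4" "b0 \<noteq> b4" "EH b1 b2" "\<not> EH b1 b3" "b1 \<noteq> b3" "EH b1 b4" "\<not> EH b2 b3" "b2 \<noteq> b3" "\<not> EH b2 b4" "b2 \<noteq> b4" "\<not> EH b3 b4" "b3 \<noteq> b4"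
  shows False
proof -
  have tot: "\<And>u v. strong_prod_E VG EG VH EH u v \<Longrightarrow> D u v \<or> D v u"
    and cl: "\<And>v x y. D v x \<Longrightarrow> D v y \<Longrightarrow> x \<noteq> y \<Longrightarrow> strong_prod_E VG EG VH EH x y"
    using O unfolding one_perfect_orientation_def orientation_def by blast+
  have GS: "\<And>u v. EG u v \<Longrightarrow> EG v u" "\<And>v. \<not> EG v v" using G unfolding graph_def by blast+
  have HS: "\<And>u v. EH u v \<Longrightarrow> EH v u" "\<And>v. \<not> EH v v" using H unfolding graph_def by blast+
  note facts = A B
  have sA: "EG a1 a0" "EG a2 a1" "a0 \<noteq> a1" "a1 \<noteq> a2" "a1 \<noteq> a0" "a2 \<noteq> a0" "a2 \<noteq> a1" "\<not> EG a2 a0" using A GS by metis+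
  have sB: "EH b1 b0" "EH b2 b0" "EH b3 b0" "EH b2 b1" "EH b4 b1" "b0 \<noteq> b1" "b0 \<noteq> b2" "b0 \<noteq> b3" "b1 \<noteq> b2" "b1 \<noteq> b4" "b1 \<noteq> b0" "b2 \<noteq> b0" "b3 \<noteq> b0" "b4 \<noteq> b0" "b2 \<noteq> b1" "b3 \<noteq> b1" "b4 \<noteq> b1" "b3 \<noteq> b2" "b4 \<noteq> b2" "b4 \<noteq> b3" "\<not> EH b4 b0" "\<not> EH b3 b1" "\<not> EH b3 b2" "\<not> EH b4 b2" "\<not> EH b4 b3" using B HS by metis+
  have c0: "\<not> (D (a0,b0) (a0,b1) \<and> D (a0,b0) (a1,b3))" using cl[of "(a0,b0)" "(a0,b1)" "(a1,b3)"] A B sA sB by (auto simp: strong_prod_E_def)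
  have c1: "\<not> (D (a0,b0) (a1,b2) \<and> D (a0,b0) (a1,b3))" using cl[of "(a0,b0)" "(a1,b2)" "(a1,b3)"] A B sA sB by (auto simp: strong_prod_E_def)
  have c2: "\<not> (D (a0,b1) (a0,b0) \<and> D (a0,b1) (a1,b4))" using cl[of "(a0,b1)" "(a0,b0)" "(a1,b4)"] A B sA sB by (auto simp: strong_prod_E_def)
  have c3: "\<not> (D (a0,b1) (a1,b2) \<and> D (a0,b1) (a1,b4))" using cl[of "(a0,b1)" "(a1,b2)" "(a1,b4)"] A B sA sB by (auto simp: strong_prod_E_def)
  have c4: "\<not> (D (a1,b2) (a0,b0) \<and> D (a1,b2) (a2,b1))" using cl[of "(a1,b2)" "(a0,b0)" "(a2,b1)"] A B sA sB by (auto simp: strong_prod_E_def)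
  have c5: "\<not> (D (a1,b2) (a0,b1) \<and> D (a1,b2) (a2,b0))" using cl[of "(a1,b2)" "(a0,b1)" "(a2,b0)"] A B sA sB by (auto simp: strong_prod_E_def)
  have c6: "\<not> (D (a1,b3) (a0,b0) \<and> D (a1,b3) (a2,b0))" using cl[of "(a1,b3)" "(a0,b0)" "(a2,b0)"] A B sA sB by (auto simp: strong_prod_E_def)
  have c7: "\<not> (D (a1,b4) (a0,b1) \<and> D (a1,b4) (a2,b1))" using cl[of "(a1,b4)" "(a0,b1)" "(a2,b1)"] A B sA sB by (auto simp: strong_prod_E_def)
  have c8: "\<not> (D (a2,b0) (a1,b2) \<and> D (a2,b0) (a1,b3))" using cl[of "(a2,b0)" "(a1,b2)" "(a1,b3)"] A B sA sB by (auto simp: strong_prod_E_def)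
  have c9: "\<not> (D (a2,b0) (a1,b3) \<and> D (a2,b0) (a2,b1))" using cl[of "(a2,b0)" "(a1,b3)" "(a2,b1)"] A B sA sB by (auto simp: strong_prod_E_def)
  have c10: "\<not> (D (a2,b1) (a1,b2) \<and> D (a2,b1) (a1,b4))" using cl[of "(a2,b1)" "(a1,b2)" "(a1,b4)"] A B sA sB by (auto simp: strong_prod_E_def)
  have c11: "\<not> (D (a2,b1) (a1,b4) \<and> D (a2,b1) (a2,b0))" using cl[of "(a2,b1)" "(a1,b4)" "(a2,b0)"] A B sA sB by (auto simp: strong_prod_E_def)
  have e0: "D (a2,b0) (a2,b1) \<or> D (a2,b1) (a2,b0)" by (rule tot) (use A B sA sB in \<open>auto simp: strong_prod_E_def\<close>)
  have e1: "D (a1,b2) (a2,b0) \<or> D (a2,b0) (a1,b2)" by (rule tot) (use A B sA sB in \<open>auto simp: strong_prod_E_def\<close>)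
  have e2: "D (a0,b0) (a0,b1) \<or> D (a0,b1) (a0,b0)" by (rule tot) (use A B sA sB in \<open>auto simp: strong_prod_E_def\<close>)
  have e3: "D (a1,b4) (a2,b1) \<or> D (a2,b1) (a1,b4)" by (rule tot) (use A B sA sB in \<open>auto simp: strong_prod_E_def\<close>)
  have e4: "D (a1,b3) (a2,b0) \<or> D (a2,b0) (a1,b3)" by (rule tot) (use A B sA sB in \<open>auto simp: strong_prod_E_def\<close>)
  have e5: "D (a0,b0) (a1,b3) \<or> D (a1,b3) (a0,b0)" by (rule tot) (use A B sA sB in \<open>auto simp: strong_prod_E_def\<close>)
  have e6: "D (a0,b1) (a1,b4) \<or> D (a1,b4) (a0,b1)" by (rule tot) (use A B sA sB in \<open>auto simp: strong_prod_E_def\<close>)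
  have e7: "D (a0,b0) (a1,b2) \<or> D (a1,b2) (a0,b0)" by (rule tot) (use A B sA sB in \<open>auto simp: strong_prod_E_def\<close>)
  have e8: "D (a1,b2) (a2,b1) \<or> D (a2,b1) (a1,b2)" by (rule tot) (use A B sA sB in \<open>auto simp: strong_prod_E_def\<close>)
  have e9: "D (a0,b1) (a1,b2) \<or> D (a1,b2) (a0,b1)" by (rule tot) (use A B sA sB in \<open>auto simp: strong_prod_E_def\<close>)
  show False using c0 c1 c2 c3 c4 c5 c6 c7 c8 c9 c10 c11 e0 e1 e2 e3 e4 e5 e6 e7 e8 e9 by sat
qed

lemma obs_P5:
  assumes G: "graph VG EG" and H: "graph VH EH"
    and O: "one_perfect_orientation (strong_prod_E VG EG VH EH) D"
    and A: "a0 \<in> VG" "a1 \<in> VG" "a2 \<in> VG" "EG a0 a1" "\<not> EG a0 a2" "a0 \<noteq> a2" "EG a1 a2"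
    and B: "b0 \<in> VH" "b1 \<in> VH" "b2 \<in> VH" "b3 \<in> VH" "b4 \<in> VH" "EH b0 b1" "\<not> EH b0 b2" "b0 \<noteq> b2" "\<not> EH b0 b3" "b0 \<noteq> b3" "\<not> EH b0 b4" "b0 \<noteq> b4" "EH b1 b2" "\<not> EH b1 b3" "b1 \<noteq> b3" "\<not> EH b1 b4" "b1 \<noteq> b4" "EH b2 b3" "\<not> EH b2 b4" "b2 \<noteq> b4" "EH b3 b4"
  shows False
proof -
  have tot: "\<And>u v. strong_prod_E VG EG VH EH u v \<Longrightarrow> D u v \<or> D v u"
    and cl: "\<And>v x y. D v x \<Longrightarrow> D v y \<Longrightarrow> x \<noteq> y \<Longrightarrow> strong_prod_E VG EG VH EH x y"
    using O unfolding one_perfect_orientation_def orientation_def by blast+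
  have GS: "\<And>u v. EG u v \<Longrightarrow> EG v u" "\<And>v. \<not> EG v v" using G unfolding graph_def by blast+
  have HS: "\<And>u v. EH u v \<Longrightarrow> EH v u" "\<And>v. \<not> EH v v" using H unfolding graph_def by blast+
  note facts = A B
  have sA: "EG a1 a0" "EG a2 a1" "a0 \<noteq> a1" "a1 \<noteq> a2" "a1 \<noteq> a0" "a2 \<noteq> a0" "a2 \<noteq> a1" "\<not> EG a2 a0" using A GS by metis+
  have sB: "EH b1 b0" "EH b2 b1" "EH b3 b2" "EH b4 b3" "b0 \<noteq> b1" "b1 \<noteq> b2" "b2 \<noteq> b3" "b3 \<noteq> b4" "b1 \<noteq> b0" "b2 \<noteq> b0" "b3 \<noteq> b0" "b4 \<noteq> b0" "b2 \<noteq> b1" "b3 \<noteq> b1" "b4 \<noteq> b1" "b3 \<noteq> b2" "b4 \<noteq> b2" "b4 \<noteq> b3" "\<not> EH b2 b0" "\<not> EH b3 b0" "\<not> EH b4 b0" "\<not> EH b3 b1" "\<not> EH b4 b1" "\<not> EH b4 b2" using B HS by metis+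
  have c0: "\<not> (D (a0,b1) (a1,b0) \<and> D (a0,b1) (a1,b2))" using cl[of "(a0,b1)" "(a1,b0)" "(a1,b2)"] A B sA sB by (auto simp: strong_prod_E_def)
  have c1: "\<not> (D (a0,b3) (a1,b2) \<and> D (a0,b3) (a1,b4))" using cl[of "(a0,b3)" "(a1,b2)" "(a1,b4)"] A B sA sB by (auto simp: strong_prod_E_def)
  have c2: "\<not> (D (a1,b0) (a0,b1) \<and> D (a1,b0) (a2,b1))" using cl[of "(a1,b0)" "(a0,b1)" "(a2,b1)"] A B sA sB by (auto simp: strong_prod_E_def)
  have c3: "\<not> (D (a1,b2) (a0,b1) \<and> D (a1,b2) (a0,b3))" using cl[of "(a1,b2)" "(a0,b1)" "(a0,b3)"] A B sA sB by (auto simp: strong_prod_E_def)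
  have c4: "\<not> (D (a1,b2) (a0,b1) \<and> D (a1,b2) (a2,b3))" using cl[of "(a1,b2)" "(a0,b1)" "(a2,b3)"] A B sA sB by (auto simp: strong_prod_E_def)
  have c5: "\<not> (D (a1,b2) (a0,b3) \<and> D (a1,b2) (a2,b1))" using cl[of "(a1,b2)" "(a0,b3)" "(a2,b1)"] A B sA sB by (auto simp: strong_prod_E_def)
  have c6: "\<not> (D (a1,b4) (a0,b3) \<and> D (a1,b4) (a2,b3))" using cl[of "(a1,b4)" "(a0,b3)" "(a2,b3)"] A B sA sB by (auto simp: strong_prod_E_def)
  have c7: "\<not> (D (a2,b1) (a1,b0) \<and> D (a2,b1) (a1,b2))" using cl[of "(a2,b1)" "(a1,b0)" "(a1,b2)"] A B sA sB by (auto simp: strong_prod_E_def)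
  have c8: "\<not> (D (a2,b1) (a1,b0) \<and> D (a2,b1) (a2,b2))" using cl[of "(a2,b1)" "(a1,b0)" "(a2,b2)"] A B sA sB by (auto simp: strong_prod_E_def)
  have c9: "\<not> (D (a2,b2) (a2,b1) \<and> D (a2,b2) (a2,b3))" using cl[of "(a2,b2)" "(a2,b1)" "(a2,b3)"] A B sA sB by (auto simp: strong_prod_E_def)
  have c10: "\<not> (D (a2,b3) (a1,b2) \<and> D (a2,b3) (a1,b4))" using cl[of "(a2,b3)" "(a1,b2)" "(a1,b4)"] A B sA sB by (auto simp: strong_prod_E_def)
  have c11: "\<not> (D (a2,b3) (a1,b4) \<and> D (a2,b3) (a2,b2))" using cl[of "(a2,b3)" "(a1,b4)" "(a2,b2)"] A B sA sB by (auto simp: strong_prod_E_def)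
  have e0: "D (a1,b2) (a2,b1) \<or> D (a2,b1) (a1,b2)" by (rule tot) (use A B sA sB in \<open>auto simp: strong_prod_E_def\<close>)
  have e1: "D (a2,b1) (a2,b2) \<or> D (a2,b2) (a2,b1)" by (rule tot) (use A B sA sB in \<open>auto simp: strong_prod_E_def\<close>)
  have e2: "D (a1,b4) (a2,b3) \<or> D (a2,b3) (a1,b4)" by (rule tot) (use A B sA sB in \<open>auto simp: strong_prod_E_def\<close>)
  have e3: "D (a0,b1) (a1,b0) \<or> D (a1,b0) (a0,b1)" by (rule tot) (use A B sA sB in \<open>auto simp: strong_prod_E_def\<close>)
  have e4: "D (a0,b3) (a1,b4) \<or> D (a1,b4) (a0,b3)" by (rule tot) (use A B sA sB in \<open>auto simp: strong_prod_E_def\<close>)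
  have e5: "D (a1,b0) (a2,b1) \<or> D (a2,b1) (a1,b0)" by (rule tot) (use A B sA sB in \<open>auto simp: strong_prod_E_def\<close>)
  have e6: "D (a1,b2) (a2,b3) \<or> D (a2,b3) (a1,b2)" by (rule tot) (use A B sA sB in \<open>auto simp: strong_prod_E_def\<close>)
  have e7: "D (a2,b2) (a2,b3) \<or> D (a2,b3) (a2,b2)" by (rule tot) (use A B sA sB in \<open>auto simp: strong_prod_E_def\<close>)
  have e8: "D (a0,b3) (a1,b2) \<or> D (a1,b2) (a0,b3)" by (rule tot) (use A B sA sB in \<open>auto simp: strong_prod_E_def\<close>)
  have e9: "D (a0,b1) (a1,b2) \<or> D (a1,b2) (a0,b1)" by (rule tot) (use A B sA sB in \<open>auto simp: strong_prod_E_def\<close>)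
  show False using c0 c1 c2 c3 c4 c5 c6 c7 c8 c9 c10 c11 e0 e1 e2 e3 e4 e5 e6 e7 e8 e9 by sat
qed

lemma obs_C5:
  assumes G: "graph VG EG" and H: "graph VH EH"
    and O: "one_perfect_orientation (strong_prod_E VG EG VH EH) D"
    and A: "a0 \<in> VG" "a1 \<in> VG" "a2 \<in> VG" "EG a0 a1" "\<not> EG a0 a2" "a0 \<noteq> a2" "EG a1 a2"
    and B: "b0 \<in> VH" "b1 \<in> VH" "b2 \<in> VH" "b3 \<in> VH" "b4 \<in> VH" "EH b0 b1" "\<not> EH b0 b2" "b0 \<noteq> b2" "\<not> EH b0 b3" "b0 \<noteq> b3" "EH b0 b4" "EH b1 b2" "\<not> EH b1 b3" "b1 \<noteq> b3" "\<not> EH b1 b4" "b1 \<noteq> b4" "EH b2 b3" "\<not> EH b2 b4" "b2 \<noteq> b4" "EH b3 b4"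
  shows False
proof -
  have tot: "\<And>u v. strong_prod_E VG EG VH EH u v \<Longrightarrow> D u v \<or> D v u"
    and cl: "\<And>v x y. D v x \<Longrightarrow> D v y \<Longrightarrow> x \<noteq> y \<Longrightarrow> strong_prod_E VG EG VH EH x y"
    using O unfolding one_perfect_orientation_def orientation_def by blast+
  have GS: "\<And>u v. EG u v \<Longrightarrow> EG v u" "\<And>v. \<not> EG v v" using G unfolding graph_def by blast+
  have HS: "\<And>u v. EH u v \<Longrightarrow> EH v u" "\<And>v. \<not> EH v v" using H unfolding graph_def by blast+
  note facts = A B
  have sA: "EG a1 a0" "EG a2 a1" "a0 \<noteq> a1" "a1 \<noteq> a2" "a1 \<noteq> a0" "a2 \<noteq> a0" "a2 \<noteq> a1" "\<not> EG a2 a0" using A GS by metis+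
  have sB: "EH b1 b0" "EH b4 b0" "EH b2 b1" "EH b3 b2" "EH b4 b3" "b0 \<noteq> b1" "b0 \<noteq> b4" "b1 \<noteq> b2" "b2 \<noteq> b3" "b3 \<noteq> b4" "b1 \<noteq> b0" "b2 \<noteq> b0" "b3 \<noteq> b0" "b4 \<noteq> b0" "b2 \<noteq> b1" "b3 \<noteq> b1" "b4 \<noteq> b1" "b3 \<noteq> b2" "b4 \<noteq> b2" "b4 \<noteq> b3" "\<not> EH b2 b0" "\<not> EH b3 b0" "\<not> EH b3 b1" "\<not> EH b4 b1" "\<not> EH b4 b2" using B HS by metis+
  have c0: "\<not> (D (a0,b4) (a1,b0) \<and> D (a0,b4) (a1,b3))" using cl[of "(a0,b4)" "(a1,b0)" "(a1,b3)"] A B sA sB by (auto simp: strong_prod_E_def)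
  have c1: "\<not> (D (a1,b0) (a0,b4) \<and> D (a1,b0) (a2,b1))" using cl[of "(a1,b0)" "(a0,b4)" "(a2,b1)"] A B sA sB by (auto simp: strong_prod_E_def)
  have c2: "\<not> (D (a1,b0) (a0,b4) \<and> D (a1,b0) (a2,b4))" using cl[of "(a1,b0)" "(a0,b4)" "(a2,b4)"] A B sA sB by (auto simp: strong_prod_E_def)
  have c3: "\<not> (D (a1,b3) (a0,b4) \<and> D (a1,b3) (a2,b2))" using cl[of "(a1,b3)" "(a0,b4)" "(a2,b2)"] A B sA sB by (auto simp: strong_prod_E_def)
  have c4: "\<not> (D (a1,b3) (a0,b4) \<and> D (a1,b3) (a2,b4))" using cl[of "(a1,b3)" "(a0,b4)" "(a2,b4)"] A B sA sB by (auto simp: strong_prod_E_def)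
  have c5: "\<not> (D (a2,b0) (a2,b1) \<and> D (a2,b0) (a2,b4))" using cl[of "(a2,b0)" "(a2,b1)" "(a2,b4)"] A B sA sB by (auto simp: strong_prod_E_def)
  have c6: "\<not> (D (a2,b1) (a1,b0) \<and> D (a2,b1) (a2,b2))" using cl[of "(a2,b1)" "(a1,b0)" "(a2,b2)"] A B sA sB by (auto simp: strong_prod_E_def)
  have c7: "\<not> (D (a2,b1) (a2,b0) \<and> D (a2,b1) (a2,b2))" using cl[of "(a2,b1)" "(a2,b0)" "(a2,b2)"] A B sA sB by (auto simp: strong_prod_E_def)
  have c8: "\<not> (D (a2,b2) (a1,b3) \<and> D (a2,b2) (a2,b1))" using cl[of "(a2,b2)" "(a1,b3)" "(a2,b1)"] A B sA sB by (auto simp: strong_prod_E_def)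
  have c9: "\<not> (D (a2,b2) (a2,b1) \<and> D (a2,b2) (a2,b3))" using cl[of "(a2,b2)" "(a2,b1)" "(a2,b3)"] A B sA sB by (auto simp: strong_prod_E_def)
  have c10: "\<not> (D (a2,b3) (a2,b2) \<and> D (a2,b3) (a2,b4))" using cl[of "(a2,b3)" "(a2,b2)" "(a2,b4)"] A B sA sB by (auto simp: strong_prod_E_def)
  have c11: "\<not> (D (a2,b4) (a1,b0) \<and> D (a2,b4) (a2,b3))" using cl[of "(a2,b4)" "(a1,b0)" "(a2,b3)"] A B sA sB by (auto simp: strong_prod_E_def)
  have c12: "\<not> (D (a2,b4) (a1,b3) \<and> D (a2,b4) (a2,b0))" using cl[of "(a2,b4)" "(a1,b3)" "(a2,b0)"] A B sA sB by (auto simp: strong_prod_E_def)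
  have e0: "D (a2,b0) (a2,b1) \<or> D (a2,b1) (a2,b0)" by (rule tot) (use A B sA sB in \<open>auto simp: strong_prod_E_def\<close>)
  have e1: "D (a1,b3) (a2,b4) \<or> D (a2,b4) (a1,b3)" by (rule tot) (use A B sA sB in \<open>auto simp: strong_prod_E_def\<close>)
  have e2: "D (a1,b0) (a2,b4) \<or> D (a2,b4) (a1,b0)" by (rule tot) (use A B sA sB in \<open>auto simp: strong_prod_E_def\<close>)
  have e3: "D (a1,b0) (a2,b1) \<or> D (a2,b1) (a1,b0)" by (rule tot) (use A B sA sB in \<open>auto simp: strong_prod_E_def\<close>)
  have e4: "D (a0,b4) (a1,b3) \<or> D (a1,b3) (a0,b4)" by (rule tot) (use A B sA sB in \<open>auto simp: strong_prod_E_def\<close>)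
  have e5: "D (a2,b0) (a2,b4) \<or> D (a2,b4) (a2,b0)" by (rule tot) (use A B sA sB in \<open>auto simp: strong_prod_E_def\<close>)
  have e6: "D (a2,b2) (a2,b3) \<or> D (a2,b3) (a2,b2)" by (rule tot) (use A B sA sB in \<open>auto simp: strong_prod_E_def\<close>)
  have e7: "D (a0,b4) (a1,b0) \<or> D (a1,b0) (a0,b4)" by (rule tot) (use A B sA sB in \<open>auto simp: strong_prod_E_def\<close>)
  have e8: "D (a2,b1) (a2,b2) \<or> D (a2,b2) (a2,b1)" by (rule tot) (use A B sA sB in \<open>auto simp: strong_prod_E_def\<close>)
  have e9: "D (a1,b3) (a2,b2) \<or> D (a2,b2) (a1,b3)" by (rule tot) (use A B sA sB in \<open>auto simp: strong_prod_E_def\<close>)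
  have e10: "D (a2,b3) (a2,b4) \<or> D (a2,b4) (a2,b3)" by (rule tot) (use A B sA sB in \<open>auto simp: strong_prod_E_def\<close>)
  show False using c0 c1 c2 c3 c4 c5 c6 c7 c8 c9 c10 c11 c12 e0 e1 e2 e3 e4 e5 e6 e7 e8 e9 e10 by sat
qed

lemma obs_P4P4:
  assumes G: "graph VG EG" and H: "graph VH EH"
    and O: "one_perfect_orientation (strong_prod_E VG EG VH EH) D"
    and A: "a0 \<in> VG" "a1 \<in> VG" "a2 \<in> VG" "a3 \<in> VG" "EG a0 a1" "\<not> EG a0 a2" "a0 \<noteq> a2" "\<not> EG a0 a3" "a0 \<noteq> a3" "EG a1 a2" "\<not> EG a1 a3" "a1 \<noteq> a3" "EG a2 a3"
    and B: "b0 \<in> VH" "b1 \<in> VH" "b2 \<in> VH" "b3 \<in> VH" "EH b0 b1" "\<not> EH b0 b2" "b0 \<noteq> b2" "\<not> EH b0 b3" "b0 \<noteq> b3" "EH b1 b2" "\<not> EH b1 b3" "b1 \<noteq> b3" "EH b2 b3"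
  shows False
proof -
  have tot: "\<And>u v. strong_prod_E VG EG VH EH u v \<Longrightarrow> D u v \<or> D v u"
    and cl: "\<And>v x y. D v x \<Longrightarrow> D v y \<Longrightarrow> x \<noteq> y \<Longrightarrow> strong_prod_E VG EG VH EH x y"
    using O unfolding one_perfect_orientation_def orientation_def by blast+
  have GS: "\<And>u v. EG u v \<Longrightarrow> EG v u" "\<And>v. \<not> EG v v" using G unfolding graph_def by blast+
  have HS: "\<And>u v. EH u v \<Longrightarrow> EH v u" "\<And>v. \<not> EH v v" using H unfolding graph_def by blast+
  note facts = A B
  have sA: "EG a1 a0" "EG a2 a1" "EG a3 a2" "a0 \<noteq> a1" "a1 \<noteq> a2" "a2 \<noteq> a3" "a1 \<noteq> a0" "a2 \<noteq> a0" "a3 \<noteq> a0" "a2 \<noteq> a1" "a3 \<noteq> a1" "a3 \<noteq> a2" "\<not> EG a2 a0" "\<not> EG a3 a0" "\<not> EG a3 a1" using A GS by metis+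
  have sB: "EH b1 b0" "EH b2 b1" "EH b3 b2" "b0 \<noteq> b1" "b1 \<noteq> b2" "b2 \<noteq> b3" "b1 \<noteq> b0" "b2 \<noteq> b0" "b3 \<noteq> b0" "b2 \<noteq> b1" "b3 \<noteq> b1" "b3 \<noteq> b2" "\<not> EH b2 b0" "\<not> EH b3 b0" "\<not> EH b3 b1" using B HS by metis+
  have c0: "\<not> (D (a0,b2) (a1,b1) \<and> D (a0,b2) (a1,b3))" using cl[of "(a0,b2)" "(a1,b1)" "(a1,b3)"] A B sA sB by (auto simp: strong_prod_E_def)
  have c1: "\<not> (D (a1,b1) (a0,b2) \<and> D (a1,b1) (a2,b1))" using cl[of "(a1,b1)" "(a0,b2)" "(a2,b1)"] A B sA sB by (auto simp: strong_prod_E_def)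
  have c2: "\<not> (D (a1,b1) (a0,b2) \<and> D (a1,b1) (a2,b2))" using cl[of "(a1,b1)" "(a0,b2)" "(a2,b2)"] A B sA sB by (auto simp: strong_prod_E_def)
  have c3: "\<not> (D (a1,b1) (a1,b2) \<and> D (a1,b1) (a2,b0))" using cl[of "(a1,b1)" "(a1,b2)" "(a2,b0)"] A B sA sB by (auto simp: strong_prod_E_def)
  have c4: "\<not> (D (a1,b1) (a2,b0) \<and> D (a1,b1) (a2,b2))" using cl[of "(a1,b1)" "(a2,b0)" "(a2,b2)"] A B sA sB by (auto simp: strong_prod_E_def)
  have c5: "\<not> (D (a1,b2) (a1,b1) \<and> D (a1,b2) (a2,b3))" using cl[of "(a1,b2)" "(a1,b1)" "(a2,b3)"] A B sA sB by (auto simp: strong_prod_E_def)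
  have c6: "\<not> (D (a1,b3) (a0,b2) \<and> D (a1,b3) (a2,b2))" using cl[of "(a1,b3)" "(a0,b2)" "(a2,b2)"] A B sA sB by (auto simp: strong_prod_E_def)
  have c7: "\<not> (D (a2,b0) (a1,b1) \<and> D (a2,b0) (a3,b1))" using cl[of "(a2,b0)" "(a1,b1)" "(a3,b1)"] A B sA sB by (auto simp: strong_prod_E_def)
  have c8: "\<not> (D (a2,b1) (a1,b1) \<and> D (a2,b1) (a3,b2))" using cl[of "(a2,b1)" "(a1,b1)" "(a3,b2)"] A B sA sB by (auto simp: strong_prod_E_def)
  have c9: "\<not> (D (a2,b2) (a1,b1) \<and> D (a2,b2) (a1,b3))" using cl[of "(a2,b2)" "(a1,b1)" "(a1,b3)"] A B sA sB by (auto simp: strong_prod_E_def)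
  have c10: "\<not> (D (a2,b2) (a1,b1) \<and> D (a2,b2) (a3,b1))" using cl[of "(a2,b2)" "(a1,b1)" "(a3,b1)"] A B sA sB by (auto simp: strong_prod_E_def)
  have c11: "\<not> (D (a2,b2) (a1,b3) \<and> D (a2,b2) (a3,b1))" using cl[of "(a2,b2)" "(a1,b3)" "(a3,b1)"] A B sA sB by (auto simp: strong_prod_E_def)
  have c12: "\<not> (D (a2,b3) (a1,b2) \<and> D (a2,b3) (a3,b2))" using cl[of "(a2,b3)" "(a1,b2)" "(a3,b2)"] A B sA sB by (auto simp: strong_prod_E_def)
  have c13: "\<not> (D (a3,b1) (a2,b0) \<and> D (a3,b1) (a2,b2))" using cl[of "(a3,b1)" "(a2,b0)" "(a2,b2)"] A B sA sB by (auto simp: strong_prod_E_def)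
  have c14: "\<not> (D (a3,b2) (a2,b1) \<and> D (a3,b2) (a2,b3))" using cl[of "(a3,b2)" "(a2,b1)" "(a2,b3)"] A B sA sB by (auto simp: strong_prod_E_def)
  have e0: "D (a0,b2) (a1,b1) \<or> D (a1,b1) (a0,b2)" by (rule tot) (use A B sA sB in \<open>auto simp: strong_prod_E_def\<close>)
  have e1: "D (a2,b1) (a3,b2) \<or> D (a3,b2) (a2,b1)" by (rule tot) (use A B sA sB in \<open>auto simp: strong_prod_E_def\<close>)
  have e2: "D (a1,b1) (a2,b1) \<or> D (a2,b1) (a1,b1)" by (rule tot) (use A B sA sB in \<open>auto simp: strong_prod_E_def\<close>)
  have e3: "D (a1,b1) (a2,b2) \<or> D (a2,b2) (a1,b1)" by (rule tot) (use A B sA sB in \<open>auto simp: strong_prod_E_def\<close>)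
  have e4: "D (a1,b1) (a2,b0) \<or> D (a2,b0) (a1,b1)" by (rule tot) (use A B sA sB in \<open>auto simp: strong_prod_E_def\<close>)
  have e5: "D (a1,b2) (a2,b3) \<or> D (a2,b3) (a1,b2)" by (rule tot) (use A B sA sB in \<open>auto simp: strong_prod_E_def\<close>)
  have e6: "D (a2,b2) (a3,b1) \<or> D (a3,b1) (a2,b2)" by (rule tot) (use A B sA sB in \<open>auto simp: strong_prod_E_def\<close>)
  have e7: "D (a1,b3) (a2,b2) \<or> D (a2,b2) (a1,b3)" by (rule tot) (use A B sA sB in \<open>auto simp: strong_prod_E_def\<close>)
  have e8: "D (a2,b3) (a3,b2) \<or> D (a3,b2) (a2,b3)" by (rule tot) (use A B sA sB in \<open>auto simp: strong_prod_E_def\<close>)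
  have e9: "D (a0,b2) (a1,b3) \<or> D (a1,b3) (a0,b2)" by (rule tot) (use A B sA sB in \<open>auto simp: strong_prod_E_def\<close>)
  have e10: "D (a1,b1) (a1,b2) \<or> D (a1,b2) (a1,b1)" by (rule tot) (use A B sA sB in \<open>auto simp: strong_prod_E_def\<close>)
  have e11: "D (a2,b0) (a3,b1) \<or> D (a3,b1) (a2,b0)" by (rule tot) (use A B sA sB in \<open>auto simp: strong_prod_E_def\<close>)
  show False using c0 c1 c2 c3 c4 c5 c6 c7 c8 c9 c10 c11 c12 c13 c14 e0 e1 e2 e3 e4 e5 e6 e7 e8 e9 e10 e11 by sat
qed

definition "P3pat V E a0 a1 a2 \<longleftrightarrow> a0 \<in> V \<and> a1 \<in> V \<and> a2 \<in> V \<and> E a0 a1 \<and> \<not> E a0 a2 \<and> a0 \<noteq> a2 \<and> E a1 a2"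
definition "P4pat V E a0 a1 a2 a3 \<longleftrightarrow> a0 \<in> V \<and> a1 \<in> V \<and> a2 \<in> V \<and> a3 \<in> V \<and> E a0 a1 \<and> \<not> E a0 a2 \<and> a0 \<noteq> a2
   \<and> \<not> E a0 a3 \<and> a0 \<noteq> a3 \<and> E a1 a2 \<and> \<not> E a1 a3 \<and> a1 \<noteq> a3 \<and> E a2 a3"
definition "clawpat V E b0 b1 b2 b3 \<longleftrightarrow> b0 \<in> V \<and> b1 \<in> V \<and> b2 \<in> V \<and> b3 \<in> V \<and> E b0 b1 \<and> E b0 b2 \<and> E b0 b3
   \<and> \<not> E b1 b2 \<and> b1 \<noteq> b2 \<and> \<not> E b1 b3 \<and> b1 \<noteq> b3 \<and> \<not> E b2 b3 \<and> b2 \<noteq> b3"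
definition "C4pat V E b0 b1 b2 b3 \<longleftrightarrow> b0 \<in> V \<and> b1 \<in> V \<and> b2 \<in> V \<and> b3 \<in> V \<and> E b0 b1 \<and> \<not> E b0 b2 \<and> b0 \<noteq> b2
   \<and> E b0 b3 \<and> E b1 b2 \<and> \<not> E b1 b3 \<and> b1 \<noteq> b3 \<and> E b2 b3"
definition "bullpat V E b0 b1 b2 b3 b4 \<longleftrightarrow> b0 \<in> V \<and> b1 \<in> V \<and> b2 \<in> V \<and> b3 \<in> V \<and> b4 \<in> V
   \<and> E b0 b1 \<and> E b0 b2 \<and> E b0 b3 \<and> \<not> E b0 b4 \<and> b0 \<noteq> b4 \<and> E b1 b2 \<and> \<not> E b1 b3 \<and> b1 \<noteq> b3 \<and> E b1 b4
   \<and> \<not> E b2 b3 \<and> b2 \<noteq> b3 \<and> \<not> E b2 b4 \<and> b2 \<noteq> b4 \<and> \<not> E b3 b4 \<and> b3 \<noteq> b4"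
definition "P5pat V E b0 b1 b2 b3 b4 \<longleftrightarrow> b0 \<in> V \<and> b1 \<in> V \<and> b2 \<in> V \<and> b3 \<in> V \<and> b4 \<in> V
   \<and> E b0 b1 \<and> \<not> E b0 b2 \<and> b0 \<noteq> b2 \<and> \<not> E b0 b3 \<and> b0 \<noteq> b3 \<and> \<not> E b0 b4 \<and> b0 \<noteq> b4
   \<and> E b1 b2 \<and> \<not> E b1 b3 \<and> b1 \<noteq> b3 \<and> \<not> E b1 b4 \<and> b1 \<noteq> b4
   \<and> E b2 b3 \<and> \<not> E b2 b4 \<and> b2 \<noteq> b4 \<and> E b3 b4"
definition "C5pat V E b0 b1 b2 b3 b4 \<longleftrightarrow> b0 \<in> V \<and> b1 \<in> V \<and> b2 \<in> V \<and> b3 \<in> V \<and> b4 \<in> V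
   \<and> E b0 b1 \<and> \<not> E b0 b2 \<and> b0 \<noteq> b2 \<and> \<not> E b0 b3 \<and> b0 \<noteq> b3 \<and> E b0 b4
   \<and> E b1 b2 \<and> \<not> E b1 b3 \<and> b1 \<noteq> b3 \<and> \<not> E b1 b4 \<and> b1 \<noteq> b4
   \<and> E b2 b3 \<and> \<not> E b2 b4 \<and> b2 \<noteq> b4 \<and> E b3 b4"

definition "freeG V E \<longleftrightarrow> (\<forall>b0 b1 b2 b3. \<not> clawpat V E b0 b1 b2 b3) \<and> (\<forall>b0 b1 b2 b3. \<not> C4pat V E b0 b1 b2 b3)
  \<and> (\<forall>b0 b1 b2 b3 b4. \<not> bullpat V E b0 b1 b2 b3 b4) \<and> (\<forall>b0 b1 b2 b3 b4. \<not> P5pat V E b0 b1 b2 b3 b4)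
  \<and> (\<forall>b0 b1 b2 b3 b4. \<not> C5pat V E b0 b1 b2 b3 b4)"

locale cg =
  fixes V :: "'a set" and E :: "'a \<Rightarrow> 'a \<Rightarrow> bool"
  assumes g: "graph V E" and conn: "connected_graph V E"
begin

lemma sym: "E u v \<Longrightarrow> E v u" using g unfolding graph_def by blast
lemma Esym: "E u v \<longleftrightarrow> E v u" using sym by blast
lemma irr: "\<not> E v v" using g unfolding graph_def by blast
lemma dom: "E u v \<Longrightarrow> u \<in> V" "E u v \<Longrightarrow> v \<in> V" using g unfolding graph_def by blast+
lemma fin: "finite V" using g unfolding graph_def by blast

definition dist where "dist u v = (LEAST n. (E ^^ n) u v)"

lemma reach: assumes "u \<in> V" "v \<in> V" shows "(E ^^ dist u v) u v"
proof -
  have "E\<^sup>*\<^sup>* u v" using conn assms unfolding connected_graph_def by blast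
  then obtain n where "(E ^^ n) u v" using rtranclp_imp_relpowp by metis
  then show ?thesis unfolding dist_def by (rule LeastI)
qed

lemma dist_le: "(E ^^ n) u v \<Longrightarrow> dist u v \<le> n"
  unfolding dist_def by (rule Least_le)

lemma dist_self: "dist u u = 0"
  using dist_le[of 0 u u] by simp

lemma dist_0: "u \<in> V \<Longrightarrow> v \<in> V \<Longrightarrow> dist u v = 0 \<Longrightarrow> u = v"
  using reach[of u v] by simp

lemma dist_adj: assumes "E u w" "v \<in> V" shows "dist u v \<le> Suc (dist w v)"
proof -
  have "w \<in> V" using dom assms by blast
  then have "(E ^^ dist w v) w v" using reach assms by blast
  then have "(E ^^ Suc (dist w v)) u v" using relpowp_Suc_I2[where P=E, OF assms(1)] by blast
  then show ?thesis by (rule dist_le)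
qed

lemma dist_1: assumes "u \<in> V" "v \<in> V" "dist u v = 1" shows "E u v"
  using reach[OF assms(1,2)] assms(3) by (auto simp: relcompp_apply)

lemma dist_step: assumes "u \<in> V" "v \<in> V" "dist u v = Suc m"
  shows "\<exists>w. E u w \<and> w \<in> V \<and> dist w v = m"
proof -
  have "(E ^^ Suc m) u v" using reach[OF assms(1,2)] assms(3) by simp
  then obtain w where w: "E u w" "(E ^^ m) w v" using relpowp_Suc_D2 by metis
  have "dist w v \<le> m" using w(2) by (rule dist_le)
  moreover have "Suc m \<le> Suc (dist w v)" using dist_adj[OF w(1) assms(2)] assms(3) by simp
  ultimately show ?thesis using w dom by auto
qed

lemma far: assumes "u \<in> V" "w \<in> V" "v \<in> V" "dist w v + 2 \<le> dist u v"
  shows "\<not> E u w" "u \<noteq> w"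
  using dist_adj[of u w v] assms by auto

lemma dist_le3:
  assumes nP5: "\<And>b0 b1 b2 b3 b4. \<not> P5pat V E b0 b1 b2 b3 b4" and uv: "u \<in> V" "v \<in> V"
  shows "dist u v \<le> 3"
proof (rule ccontr)
  assume "\<not> dist u v \<le> 3"
  then have m: "dist u v = Suc (Suc (Suc (Suc (dist u v - 4))))" by simp
  define m where "m = dist u v - 4"
  note m = m[folded m_def]
  obtain w1 where w1: "E u w1" "w1 \<in> V" "dist w1 v = Suc (Suc (Suc m))" using dist_step[OF uv m] by blast
  obtain w2 where w2: "E w1 w2" "w2 \<in> V" "dist w2 v = Suc (Suc m)" using dist_step[OF w1(2) uv(2) w1(3)] by blast
  obtain w3 where w3: "E w2 w3" "w3 \<in> V" "dist w3 v = Suc m" using dist_step[OF w2(2) uv(2) w2(3)] by blast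
  obtain w4 where w4: "E w3 w4" "w4 \<in> V" "dist w4 v = m" using dist_step[OF w3(2) uv(2) w3(3)] by blast
  have f: "\<not> E u w2" "u \<noteq> w2" using far[of u w2 v] w2 uv m by auto
  have g: "\<not> E u w3" "u \<noteq> w3" using far[of u w3 v] w3 uv m by auto
  have h: "\<not> E u w4" "u \<noteq> w4" using far[of u w4 v] w4 uv m by auto
  have i: "\<not> E w1 w3" "w1 \<noteq> w3" using far[of w1 w3 v] w1 w3 uv by auto
  have j: "\<not> E w1 w4" "w1 \<noteq> w4" using far[of w1 w4 v] w1 w4 uv by auto
  have k: "\<not> E w2 w4" "w2 \<noteq> w4" using far[of w2 w4 v] w2 w4 uv by auto
  have "P5pat V E u w1 w2 w3 w4"
    unfolding P5pat_def using w1(1,2) w2(1,2) w3(1,2) w4(1,2) uv f g h i j k by blast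
  then show False using nP5 by blast
qed

end

lemma freeD: assumes "freeG V E"
  shows "\<not> clawpat V E b0 b1 b2 b3" "\<not> C4pat V E b0 b1 b2 b3" "\<not> bullpat V E b0 b1 b2 b3 b4"
    "\<not> P5pat V E b0 b1 b2 b3 b4" "\<not> C5pat V E b0 b1 b2 b3 b4"
  using assms by (auto simp: freeG_def)

context cg begin

lemma commonA:
  assumes fr: "freeG V E"
    and V: "a \<in> V" "b \<in> V" "c \<in> V" "v \<in> V"
    and ind: "\<not> E a b" "\<not> E a c" "\<not> E b c" "a \<noteq> b" "a \<noteq> c" "b \<noteq> c"
    and va: "E v a" "E v b"
  shows False
proof -
  have ncl: "\<And>b0 b1 b2 b3. \<not> clawpat V E b0 b1 b2 b3" and nbull: "\<And>b0 b1 b2 b3 b4. \<not> bullpat V E b0 b1 b2 b3 b4"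
    and nP5: "\<And>b0 b1 b2 b3 b4. \<not> P5pat V E b0 b1 b2 b3 b4" using freeD[OF fr] by auto
  have ind': "\<not> E b a" "\<not> E c a" "\<not> E c b" using ind sym by blast+
  have va': "E a v" "E b v" using va sym by blast+
  show False
  proof (cases "E v c")
    case True
    then show False using ncl[of v a b c] V ind va unfolding clawpat_def by blast
  next
    case nvc: False
    have cv: "c \<noteq> v" using va' ind by blast
    have ncv: "\<not> E c v" using nvc sym by blast
    have d3: "dist c v \<le> 3" using dist_le3[OF nP5 V(3,4)] .
    have d0: "dist c v \<noteq> 0" using dist_0[OF V(3,4)] cv by blast
    have d1: "dist c v \<noteq> 1" using dist_1[OF V(3,4)] ncv by blast
    have "dist c v = 2 \<or> dist c v = 3" using d3 d0 d1 by linarith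
    then show False
    proof
      assume d: "dist c v = 2"
      then obtain u where u: "E c u" "u \<in> V" "dist u v = 1" using dist_step[OF V(3,4), of 1] by auto
      have uv: "E u v" using dist_1[OF u(2) V(4) u(3)] .
      have uc: "E u c" using u sym by blast
      have ua: "u \<noteq> a" "u \<noteq> b" "u \<noteq> c" "u \<noteq> v" using u ind' irr uv by auto
      have vu: "E v u" using uv sym by blast
      consider "E u a" "E u b" | "\<not> E u a" "\<not> E u b" | "E u a" "\<not> E u b" | "\<not> E u a" "E u b" by blast
      then show False
      proof cases
        case 1 then show False using ncl[of u a b c] V u uc ind unfolding clawpat_def by blast
      next
        case 2 then show False using ncl[of v a b u] V u va vu ind ua sym unfolding clawpat_def by blast
      next
        case 3 then show False using nbull[of v u a b c] V u va vu uc ind ua nvc cv sym unfolding bullpat_def by blast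
      next
        case 4 then show False using nbull[of v u b a c] V u va vu uc ind ua nvc cv sym unfolding bullpat_def by blast
      qed
    next
      assume d: "dist c v = 3"
      then obtain w where w: "E c w" "w \<in> V" "dist w v = 2" using dist_step[OF V(3,4), of 2] by auto
      then obtain u where u: "E w u" "u \<in> V" "dist u v = 1" using dist_step[OF w(2) V(4), of 1] by auto
      have uv: "E u v" using dist_1[OF u(2) V(4) u(3)] .
      have cu: "\<not> E c u" "c \<noteq> u" using far[OF V(3) u(2) V(4)] u d by auto
      have wv: "\<not> E w v" "w \<noteq> v" using far[OF w(2) V(4) V(4)] w dist_self by auto
      have wc: "E w c" using w sym by blast
      have wa: "w \<noteq> a" "w \<noteq> b" "w \<noteq> c" using w ind' irr by auto
      consider "E w a" "E w b" | "E w a" "\<not> E w b" | "\<not> E w a" "E w b" | "\<not> E w a" "\<not> E w b" by blast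
      then show False
      proof cases
        case 1 then show False using ncl[of w a b c] V w wc ind unfolding clawpat_def by blast
      next
        case 2 then show False using nP5[of c w a v b] V w va' va ind ind' wv cv nvc ncv sym unfolding P5pat_def by blast
      next
        case 3 then show False using nP5[of c w b v a] V w va' va ind ind' wv cv nvc ncv sym unfolding P5pat_def by blast
      next
        case 4
        note w4 = this
        have w4': "\<not> E a w" "\<not> E b w" using w4 sym by blast+
        have ua: "u \<noteq> a" "u \<noteq> b" "u \<noteq> v" using u w4 irr uv by auto
        have vu: "E v u" "E u w" using uv u sym by blast+
        have cu': "\<not> E u c" using cu sym by blast
        have wv': "\<not> E v w" using wv sym by blast
        consider "E u a" "E u b" | "\<not> E u a" "\<not> E u b" | "E u a" "\<not> E u b" | "\<not> E u a" "E u b" by blast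
        then show False
        proof cases
          case 1 then show False using ncl[of u a b w] V u w vu w4' ind wa unfolding clawpat_def by blast
        next
          case 2
          have "\<not> E a u" "\<not> E b u" using 2 sym by blast+
          then show False using ncl[of v a b u] V u va vu ind ua unfolding clawpat_def by blast
        next
          case 3
          have "\<not> E b u" using 3 sym by blast
          then have "P5pat V E b v u w c" unfolding P5pat_def using V u w va' vu cu' wv' wv w4' ind' ind wa ua wc cv nvc cu by auto
          then show False using nP5 by blast
        next
          case 4
          have "\<not> E a u" using 4 sym by blast
          then have "P5pat V E a v u w c" unfolding P5pat_def using V u w va' vu cu' wv' wv w4' ind' ind wa ua wc cv nvc cu by auto
          then show False using nP5 by blast
        qed
      qed
    qed
  qed
qed

lemma indep3:
  assumes fr: "freeG V E"
    and V: "a \<in> V" "b \<in> V" "c \<in> V"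
    and ind: "\<not> E a b" "\<not> E a c" "\<not> E b c" "a \<noteq> b" "a \<noteq> c" "b \<noteq> c"
  shows False
proof -
  have nP5: "\<And>b0 b1 b2 b3 b4. \<not> P5pat V E b0 b1 b2 b3 b4" using freeD[OF fr] by auto
  have d3: "dist a b \<le> 3" using dist_le3[OF nP5 V(1,2)] .
  have d0: "dist a b \<noteq> 0" using dist_0[OF V(1,2)] ind by blast
  have d1: "dist a b \<noteq> 1" using dist_1[OF V(1,2)] ind by blast
  have "dist a b = 2 \<or> dist a b = 3" using d3 d0 d1 by linarith
  then show False
  proof
    assume d: "dist a b = 2"
    then obtain w where w: "E a w" "w \<in> V" "dist w b = 1" using dist_step[OF V(1,2), of 1] by auto
    have "E w b" using dist_1[OF w(2) V(2) w(3)] .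
    then show False using commonA[OF fr V w(2) ind] w sym by blast
  next
    assume d: "dist a b = 3"
    then obtain w1 where w1: "E a w1" "w1 \<in> V" "dist w1 b = 2" using dist_step[OF V(1,2), of 2] by auto
    then obtain w2 where w2: "E w1 w2" "w2 \<in> V" "dist w2 b = 1" using dist_step[OF w1(2) V(2), of 1] by auto
    have w2b: "E w2 b" using dist_1[OF w2(2) V(2) w2(3)] .
    show False
    proof (cases "E w2 c")
      case True
      have "\<not> E b a" "\<not> E c a" using ind sym by blast+
      then show False using commonA[OF fr V(2,3,1) w2(2)] ind True w2b by blast
    next
      case False
      have aw2: "\<not> E a w2" "a \<noteq> w2" using far[OF V(1) w2(2) V(2)] d w2 by auto
      have w2c: "w2 \<noteq> c" using w2b ind sym by blast
      show False using commonA[OF fr V(1) w2(2) V(3) w1(2)] aw2 False w2c ind w1 w2 sym by blast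
    qed
  qed
qed

end

context cg begin

lemma two_vertices: assumes "card V \<ge> 2" obtains u w where "u \<in> V" "w \<in> V" "u \<noteq> w"
proof -
  have "\<exists>u w. u \<in> V \<and> w \<in> V \<and> u \<noteq> w"
  proof (rule ccontr)
    assume "\<not> ?thesis"
    then have "\<forall>u\<in>V. \<forall>w\<in>V. u = w" by blast
    then have "card V \<le> Suc 0" using card_le_Suc0_iff_eq[OF fin] by blast
    then show False using assms by simp
  qed
  then show ?thesis using that by blast
qed

lemma cobip:
  assumes fr: "freeG V E" and tw: "\<not> has_true_twins V E" and c2: "card V \<ge> 2"
  obtains X Y p where "V = X \<union> Y" "X \<inter> Y = {}" "Y \<noteq> {}" "p \<in> X" "\<And>y. y \<in> Y \<Longrightarrow> \<not> E p y"
    "\<And>x x'. x \<in> X \<Longrightarrow> x' \<in> X \<Longrightarrow> x \<noteq> x' \<Longrightarrow> E x x'"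
    "\<And>y y'. y \<in> Y \<Longrightarrow> y' \<in> Y \<Longrightarrow> y \<noteq> y' \<Longrightarrow> E y y'"
proof -
  define nd where "nd u = card {w \<in> V. w \<noteq> u \<and> \<not> E u w}" for u
  have Vne: "V \<noteq> {}" using c2 by auto
  define M where "M = Max (nd ` V)"
  have "M \<in> nd ` V" unfolding M_def using fin Vne by (intro Max_in) auto
  then obtain p where p: "p \<in> V" "nd p = M" by auto
  have pmax: "\<And>u. u \<in> V \<Longrightarrow> nd u \<le> nd p" using Max_ge[of "nd ` V"] fin p unfolding M_def by auto
  define Y where "Y = {w \<in> V. w \<noteq> p \<and> \<not> E p w}"
  define X where "X = V - Y"
  have finY: "finite Y" using fin unfolding Y_def by auto
  have ndp: "nd p = card Y" unfolding nd_def Y_def by simp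
  have VXY: "V = X \<union> Y" "X \<inter> Y = {}" unfolding X_def Y_def by auto
  have pX: "p \<in> X" using p unfolding X_def Y_def by auto
  have Xp: "\<And>x. x \<in> X \<Longrightarrow> x \<noteq> p \<Longrightarrow> E p x" unfolding X_def Y_def by auto
  have XV: "X \<subseteq> V" unfolding X_def by auto
  have YV: "Y \<subseteq> V" unfolding Y_def by auto
  have pY: "\<And>y. y \<in> Y \<Longrightarrow> \<not> E p y" unfolding Y_def by auto
  have pnY: "p \<notin> Y" unfolding Y_def by auto
  have cY: "E y y'" if "y \<in> Y" "y' \<in> Y" "y \<noteq> y'" for y y'
  proof (rule ccontr)
    assume "\<not> E y y'"
    then show False using indep3[OF fr p(1), of y y'] that YV unfolding Y_def by auto
  qed
  have Yne: "Y \<noteq> {}"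
  proof
    assume Y0: "Y = {}"
    then have "nd p = 0" using ndp by simp
    then have z: "\<And>u. u \<in> V \<Longrightarrow> nd u = 0" using pmax by fastforce
    have adj: "E u w" if "u \<in> V" "w \<in> V" "u \<noteq> w" for u w
    proof -
      have "card {w \<in> V. w \<noteq> u \<and> \<not> E u w} = 0" using z[OF that(1)] unfolding nd_def .
      then have "{w \<in> V. w \<noteq> u \<and> \<not> E u w} = {}" using fin by simp
      then show ?thesis using that by blast
    qed
    obtain u w where uw: "u \<in> V" "w \<in> V" "u \<noteq> w" using two_vertices c2 by blast
    have "closed_nbhd V E u = closed_nbhd V E w"
      unfolding closed_nbhd_def using adj uw by auto
    then show False using tw uw unfolding has_true_twins_def by blast
  qed
  have cX: "E a b" if ab: "a \<in> X" "b \<in> X" "a \<noteq> b" for a b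
  proof (rule ccontr)
    assume nab: "\<not> E a b"
    have ap: "a \<noteq> p" using Xp ab nab by blast
    have bp: "b \<noteq> p" using Xp ab nab sym by blast
    have pa: "E p a" "E p b" using Xp ab ap bp by auto
    have aV: "a \<in> V" "b \<in> V" using ab XV by auto
    have aY: "a \<notin> Y" "b \<notin> Y" using ab VXY by auto
    have one: "E y a \<or> E y b" if "y \<in> Y" for y
    proof (rule ccontr)
      assume "\<not> (E y a \<or> E y b)"
      then show False using indep3[OF fr, of y a b] that YV aV aY nab ab(3) by blast
    qed
    have notboth: "\<not> (E y a \<and> E y b)" if "y \<in> Y" for y
    proof
      assume h: "E y a \<and> E y b"
      have "C4pat V E p a y b" unfolding C4pat_def
        using h p(1) aV that YV pa pY[OF that] nab sym ab aY pnY by auto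
      then show False using freeD[OF fr] by blast
    qed
    have "(\<forall>y\<in>Y. E y a) \<or> (\<forall>y\<in>Y. E y b)"
    proof (rule ccontr)
      assume "\<not> ?thesis"
      then obtain y1 y2 where y: "y1 \<in> Y" "\<not> E y1 a" "y2 \<in> Y" "\<not> E y2 b" by blast
      have y1b: "E y1 b" using one y by blast
      have y2a: "E y2 a" using one y by blast
      have y12: "y1 \<noteq> y2" using y y1b y2a by blast
      have "C5pat V E p a y2 y1 b" unfolding C5pat_def
        using p(1) aV y YV pa pY y1b y2a y12 cY[of y2 y1] nab sym aY pnY ab by auto
      then show False using freeD(5)[OF fr] by metis
    qed
    then show False
    proof
      assume all: "\<forall>y\<in>Y. E y a"
      then have nb: "\<forall>y\<in>Y. \<not> E b y" using notboth sym by blast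
      have "insert a Y \<subseteq> {w \<in> V. w \<noteq> b \<and> \<not> E b w}" using nb aV YV ab nab sym aY by auto
      then have "card (insert a Y) \<le> nd b" unfolding nd_def using fin by (intro card_mono) auto
      then have "card Y + 1 \<le> nd b" using aY finY by simp
      then show False using pmax[OF aV(2)] ndp by simp
    next
      assume all: "\<forall>y\<in>Y. E y b"
      then have nb: "\<forall>y\<in>Y. \<not> E a y" using notboth sym by blast
      have "insert b Y \<subseteq> {w \<in> V. w \<noteq> a \<and> \<not> E a w}" using nb aV YV ab nab sym aY by auto
      then have "card (insert b Y) \<le> nd a" unfolding nd_def using fin by (intro card_mono) auto
      then have "card Y + 1 \<le> nd a" using aY finY by simp
      then show False using pmax[OF aV(1)] ndp by simp
    qed
  qed
  show ?thesis using that[OF VXY Yne pX pY cX cY] by blast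
qed

end

lemma iso_A:
  assumes g: "graph V E" and VXY: "V = X \<union> Y" "X \<inter> Y = {}"
    and cX: "\<And>x x'. x \<in> X \<Longrightarrow> x' \<in> X \<Longrightarrow> x \<noteq> x' \<Longrightarrow> E x x'"
    and cY: "\<And>y y'. y \<in> Y \<Longrightarrow> y' \<in> Y \<Longrightarrow> y \<noteq> y' \<Longrightarrow> E y y'"
    and iX: "inj_on i X" "i ` X = {..<s}" and kY: "inj_on k Y" "k ` Y = {1..s}"
    and key: "\<And>x y. x \<in> X \<Longrightarrow> y \<in> Y \<Longrightarrow> E x y \<longleftrightarrow> k y \<le> i x"
    and s2: "s \<ge> 2"
  shows "graph_iso V E (raft_V (s - 1)) (raft_E (s - 1))"
proof -
  have sym: "\<And>u v. E u v \<Longrightarrow> E v u" and irr: "\<And>v. \<not> E v v" using g unfolding graph_def by blast+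
  define \<phi> where "\<phi> v = (if v \<in> X then (False, i v) else (True, s - k v))" for v
  have ib: "\<And>x. x \<in> X \<Longrightarrow> i x < s" using iX by auto
  have kb: "\<And>y. y \<in> Y \<Longrightarrow> 1 \<le> k y \<and> k y \<le> s" using kY by auto
  have inj: "inj_on \<phi> V"
  proof (rule inj_onI)
    fix u v assume uv: "u \<in> V" "v \<in> V" "\<phi> u = \<phi> v"
    show "u = v"
    proof (cases "u \<in> X")
      case True
      then have "v \<in> X" using uv unfolding \<phi>_def by (auto split: if_splits)
      then show ?thesis using True uv iX(1) unfolding \<phi>_def by (auto dest: inj_onD)
    next
      case False
      then have u: "u \<in> Y" "v \<in> Y" using uv VXY unfolding \<phi>_def by (auto split: if_splits)
      then have "s - k u = s - k v" using uv VXY unfolding \<phi>_def by (auto split: if_splits)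
      then have "k u = k v" using kb[OF u(1)] kb[OF u(2)] by linarith
      then show ?thesis using u kY(1) by (auto dest: inj_onD)
    qed
  qed
  have img: "\<phi> ` V = raft_V (s - 1)"
  proof
    show "\<phi> ` V \<subseteq> raft_V (s - 1)"
    proof
      fix q assume "q \<in> \<phi> ` V"
      then obtain v where v: "v \<in> V" "q = \<phi> v" by blast
      show "q \<in> raft_V (s - 1)"
      proof (cases "v \<in> X")
        case True
        then show ?thesis using ib[OF True] v unfolding \<phi>_def raft_V_def by auto
      next
        case False
        then have "v \<in> Y" using v VXY by auto
        then show ?thesis using kb[of v] v False unfolding \<phi>_def raft_V_def by auto
      qed
    qed
  next
    show "raft_V (s - 1) \<subseteq> \<phi> ` V"
    proof
      fix q assume q: "q \<in> raft_V (s - 1)"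
      obtain b j where bj: "q = (b, j)" by fastforce
      have j: "j \<le> s - 1" using q bj unfolding raft_V_def by auto
      show "q \<in> \<phi> ` V"
      proof (cases b)
        case False
        have "s \<ge> 1" using s2 by simp
        then have "j \<in> i ` X" using iX j by auto
        then obtain x where "x \<in> X" "i x = j" by auto
        then show ?thesis using bj False VXY unfolding \<phi>_def by (auto intro!: image_eqI[of _ _ x])
      next
        case True
        have "s - j \<in> k ` Y" using kY j s2 by auto
        then obtain y where y: "y \<in> Y" "k y = s - j" by auto
        have "y \<notin> X" using y VXY by auto
        moreover have "s - (s - j) = j" using j s2 by simp
        ultimately have "\<phi> y = (True, j)" using y unfolding \<phi>_def by simp
        then show ?thesis using bj True y VXY by (auto intro!: image_eqI[of _ _ y])
      qed
    qed
  qed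
  have adj: "E u v \<longleftrightarrow> raft_E (s - 1) (\<phi> u) (\<phi> v)" if uv: "u \<in> V" "v \<in> V" for u v
  proof (cases "u = v")
    case True
    then show ?thesis using irr unfolding raft_E_def by auto
  next
    case False
    then have ne: "\<phi> u \<noteq> \<phi> v" using inj uv by (auto dest: inj_onD)
    have mem: "\<phi> u \<in> raft_V (s - 1)" "\<phi> v \<in> raft_V (s - 1)" using img uv by auto
    consider "u \<in> X" "v \<in> X" | "u \<in> Y" "v \<in> Y" | "u \<in> X" "v \<in> Y" | "u \<in> Y" "v \<in> X" using uv VXY by blast
    then show ?thesis
    proof cases
      case 1 then show ?thesis using cX False ne mem unfolding raft_E_def \<phi>_def by auto
    next
      case 2
      then have "u \<notin> X" "v \<notin> X" using VXY by auto
      then show ?thesis using 2 cY False ne mem unfolding raft_E_def \<phi>_def by auto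
    next
      case 3
      then have "v \<notin> X" using VXY by auto
      moreover have "k v \<le> s" "i u < s" using kb 3 ib by auto
      ultimately show ?thesis using 3 key[of u v] ne mem unfolding raft_E_def \<phi>_def by auto
    next
      case 4
      then have "u \<notin> X" using VXY by auto
      moreover have "k u \<le> s" "i v < s" using kb 4 ib by auto
      moreover have "E u v \<longleftrightarrow> E v u" using sym by blast
      ultimately show ?thesis using 4 key[of v u] ne mem unfolding raft_E_def \<phi>_def by auto
    qed
  qed
  show ?thesis unfolding graph_iso_def bij_betw_def using inj img adj by blast
qed


lemma iso_B:
  assumes g: "graph V E" and VXY: "V = X \<union> Y" "X \<inter> Y = {}"
    and cX: "\<And>x x'. x \<in> X \<Longrightarrow> x' \<in> X \<Longrightarrow> x \<noteq> x' \<Longrightarrow> E x x'"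
    and cY: "\<And>y y'. y \<in> Y \<Longrightarrow> y' \<in> Y \<Longrightarrow> y \<noteq> y' \<Longrightarrow> E y y'"
    and iX: "inj_on i X" "i ` X = {..<s}" and kY: "inj_on k Y" "k ` Y = {1..<s}"
    and key: "\<And>x y. x \<in> X \<Longrightarrow> y \<in> Y \<Longrightarrow> E x y \<longleftrightarrow> k y \<le> i x"
    and s2: "s \<ge> 2"
  shows "graph_iso V E (raftK1_V (s - 2)) (raftK1_E (s - 2))"
proof -
  have sym: "\<And>u v. E u v \<Longrightarrow> E v u" and irr: "\<And>v. \<not> E v v" using g unfolding graph_def by blast+
  define \<phi> where "\<phi> v = (if v \<in> X then (if i v = s - 1 then None else Some (False, i v))
     else Some (True, s - 1 - k v))" for v
  have ib: "\<And>x. x \<in> X \<Longrightarrow> i x < s" using iX by auto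
  have kb: "\<And>y. y \<in> Y \<Longrightarrow> 1 \<le> k y \<and> k y < s" using kY by auto
  have inj: "inj_on \<phi> V"
  proof (rule inj_onI)
    fix u v assume uv: "u \<in> V" "v \<in> V" "\<phi> u = \<phi> v"
    show "u = v"
    proof (cases "u \<in> X")
      case True
      then have vX: "v \<in> X" using uv unfolding \<phi>_def by (auto split: if_splits)
      then have "i u = i v" using True uv unfolding \<phi>_def by (auto split: if_splits)
      then show ?thesis using True vX iX(1) by (auto dest: inj_onD)
    next
      case False
      then have u: "u \<in> Y" "v \<in> Y" "v \<notin> X" using uv VXY unfolding \<phi>_def by (auto split: if_splits)
      then have "s - 1 - k u = s - 1 - k v" using uv False unfolding \<phi>_def by auto
      then have "k u = k v" using kb[OF u(1)] kb[OF u(2)] by linarith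
      then show ?thesis using u kY(1) by (auto dest: inj_onD)
    qed
  qed
  have img: "\<phi> ` V = raftK1_V (s - 2)"
  proof
    show "\<phi> ` V \<subseteq> raftK1_V (s - 2)"
    proof
      fix q assume "q \<in> \<phi> ` V"
      then obtain v where v: "v \<in> V" "q = \<phi> v" by blast
      show "q \<in> raftK1_V (s - 2)"
      proof (cases "v \<in> X")
        case True
        then show ?thesis using ib[OF True] v unfolding \<phi>_def raftK1_V_def raft_V_def by auto
      next
        case False
        then have "v \<in> Y" using v VXY by auto
        then show ?thesis using kb[of v] v False unfolding \<phi>_def raftK1_V_def raft_V_def by auto
      qed
    qed
  next
    show "raftK1_V (s - 2) \<subseteq> \<phi> ` V"
    proof
      fix q assume q: "q \<in> raftK1_V (s - 2)"
      show "q \<in> \<phi> ` V"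
      proof (cases q)
        case None
        have "s - 1 \<in> i ` X" using iX s2 by auto
        then obtain x where "x \<in> X" "i x = s - 1" by auto
        then show ?thesis using None VXY unfolding \<phi>_def by (auto intro!: image_eqI[of _ _ x])
      next
        case (Some bj)
        obtain b j where bj: "q = Some (b, j)" using Some by (cases bj) auto
        have j: "j \<le> s - 2" using q bj unfolding raftK1_V_def raft_V_def by auto
        show ?thesis
        proof (cases b)
          case False
          have "j \<in> i ` X" using iX j s2 by auto
          then obtain x where x: "x \<in> X" "i x = j" by auto
          have "j \<noteq> s - 1" using j s2 by auto
          then show ?thesis using bj False VXY x unfolding \<phi>_def by (auto intro!: image_eqI[of _ _ x])
        next
          case True
          have "s - 1 - j \<in> k ` Y" using kY j s2 by auto
          then obtain y where y: "y \<in> Y" "k y = s - 1 - j" by auto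
          have "y \<notin> X" using y VXY by auto
          moreover have "s - 1 - (s - 1 - j) = j" using j s2 by simp
          ultimately have "\<phi> y = Some (True, j)" using y unfolding \<phi>_def by simp
          then show ?thesis using bj True y VXY by (auto intro!: image_eqI[of _ _ y])
        qed
      qed
    qed
  qed
  have adj: "E u v \<longleftrightarrow> raftK1_E (s - 2) (\<phi> u) (\<phi> v)" if uv: "u \<in> V" "v \<in> V" for u v
  proof (cases "u = v")
    case True
    then show ?thesis using irr unfolding raftK1_E_def by auto
  next
    case False
    then have ne: "\<phi> u \<noteq> \<phi> v" using inj uv by (auto dest: inj_onD)
    have mem: "\<phi> u \<in> raftK1_V (s - 2)" "\<phi> v \<in> raftK1_V (s - 2)" using img uv by auto
    have memr: "\<And>w. w \<in> X \<Longrightarrow> i w \<noteq> s - 1 \<Longrightarrow> (False, i w) \<in> raft_V (s - 2)"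
      using ib unfolding raft_V_def by fastforce
    have memr2: "\<And>w. w \<in> Y \<Longrightarrow> (True, s - 1 - k w) \<in> raft_V (s - 2)"
      using kb unfolding raft_V_def by fastforce
    consider "u \<in> X" "v \<in> X" | "u \<in> Y" "v \<in> Y" | "u \<in> X" "v \<in> Y" | "u \<in> Y" "v \<in> X" using uv VXY by blast
    then show ?thesis
    proof cases
      case 1 then show ?thesis using cX False ne mem memr unfolding raftK1_E_def raft_E_def \<phi>_def by auto
    next
      case 2
      then have "u \<notin> X" "v \<notin> X" using VXY by auto
      then show ?thesis using 2 cY False ne mem memr2 unfolding raftK1_E_def raft_E_def \<phi>_def by auto
    next
      case 3
      then have "v \<notin> X" using VXY by auto
      moreover have "1 \<le> k v" "k v < s" "i u < s" using kb 3 ib by auto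
      ultimately show ?thesis using 3 key[of u v] ne mem memr memr2 unfolding raftK1_E_def raft_E_def \<phi>_def by auto
    next
      case 4
      then have "u \<notin> X" using VXY by auto
      moreover have "1 \<le> k u" "k u < s" "i v < s" using kb 4 ib by auto
      moreover have "E u v \<longleftrightarrow> E v u" using sym by blast
      ultimately show ?thesis using 4 key[of v u] ne mem memr memr2 unfolding raftK1_E_def raft_E_def \<phi>_def by auto
    qed
  qed
  show ?thesis unfolding graph_iso_def bij_betw_def using inj img adj by blast
qed

lemma iso_P3:
  fixes V :: "'v set" and i k :: "'v \<Rightarrow> nat"
  assumes g: "graph V E" and VXY: "V = X \<union> Y" "X \<inter> Y = {}"
    and cX: "\<And>x x'. x \<in> X \<Longrightarrow> x' \<in> X \<Longrightarrow> x \<noteq> x' \<Longrightarrow> E x x'"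
    and iX: "inj_on i X" "i ` X = {..<2}" and kY: "inj_on k Y" "k ` Y = {1..<2}"
    and key: "\<And>x y. x \<in> X \<Longrightarrow> y \<in> Y \<Longrightarrow> E x y \<longleftrightarrow> k y \<le> i x"
  shows "graph_iso V E P3_V P3_E"
proof -
  have sym: "\<And>u v. E u v \<Longrightarrow> E v u" and irr: "\<And>v. \<not> E v v" using g unfolding graph_def by blast+
  define \<phi> where "\<phi> v = (if v \<in> X then i v else 2)" for v
  have kY1: "k y = 1" if "y \<in> Y" for y
  proof -
    have "k y \<in> {1..<2}" using kY(2) that by blast
    then show ?thesis by auto
  qed
  have Y1: "\<And>y y'. y \<in> Y \<Longrightarrow> y' \<in> Y \<Longrightarrow> y = y'" using kY1 kY(1) by (metis inj_onD)
  have ib: "\<And>x. x \<in> X \<Longrightarrow> i x < 2" using iX by auto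
  have inj: "inj_on \<phi> V"
  proof (rule inj_onI)
    fix u v assume uv: "u \<in> V" "v \<in> V" "\<phi> u = \<phi> v"
    show "u = v"
    proof (cases "u \<in> X")
      case True
      then have "v \<in> X" using uv ib[OF True] unfolding \<phi>_def by (auto split: if_splits)
      then show ?thesis using True uv iX(1) unfolding \<phi>_def by (auto dest: inj_onD)
    next
      case False
      then have "v \<notin> X" using uv ib unfolding \<phi>_def by (metis less_irrefl)
      then show ?thesis using False uv VXY Y1 by blast
    qed
  qed
  have Yne: "Y \<noteq> {}" using kY by auto
  have img: "\<phi> ` V = P3_V"
  proof
    show "\<phi> ` V \<subseteq> P3_V"
    proof
      fix q assume "q \<in> \<phi> ` V"
      then obtain v where v: "v \<in> V" "q = \<phi> v" by blast
      show "q \<in> P3_V"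
      proof (cases "v \<in> X")
        case True
        then have "i v = 0 \<or> i v = 1" using ib[OF True] by auto
        then show ?thesis using True v unfolding \<phi>_def P3_V_def by auto
      qed (use v in \<open>auto simp: \<phi>_def P3_V_def\<close>)
    qed
  next
    have "0 \<in> i ` X" "1 \<in> i ` X" using iX by auto
    then obtain x0 x1 where "x0 \<in> X" "i x0 = 0" "x1 \<in> X" "i x1 = 1" by (metis imageE)
    moreover obtain y where "y \<in> Y" using Yne by blast
    ultimately have "\<phi> x0 = 0" "\<phi> x1 = 1" "\<phi> y = 2" "x0 \<in> V" "x1 \<in> V" "y \<in> V"
      unfolding \<phi>_def using VXY by auto
    then show "P3_V \<subseteq> \<phi> ` V" unfolding P3_V_def by (metis empty_subsetI image_eqI insert_subset)
  qed
  have P3E: "\<And>a b. P3_E a b \<longleftrightarrow> (a = 0 \<and> b = 1) \<or> (a = 1 \<and> b = 0) \<or> (a = 1 \<and> b = 2) \<or> (a = 2 \<and> b = 1)"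
    unfolding P3_E_def by (auto simp: doubleton_eq_iff)
  have adj: "E u v \<longleftrightarrow> P3_E (\<phi> u) (\<phi> v)" if uv: "u \<in> V" "v \<in> V" for u v
  proof (cases "u = v")
    case True
    then show ?thesis using irr unfolding P3E by auto
  next
    case False
    then have ne: "\<phi> u \<noteq> \<phi> v" using inj uv by (auto dest: inj_onD)
    consider "u \<in> X" "v \<in> X" | "u \<in> Y" "v \<in> Y" | "u \<in> X" "v \<in> Y" | "u \<in> Y" "v \<in> X" using uv VXY by blast
    then show ?thesis
    proof cases
      case 1
      have iu: "i u = 0 \<or> i u = 1" "i v = 0 \<or> i v = 1" using ib[OF 1(1)] ib[OF 1(2)] by auto
      have "i u \<noteq> i v" using ne 1 unfolding \<phi>_def by auto
      moreover have "E u v" using cX 1 False by blast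
      ultimately show ?thesis using iu 1 unfolding P3E \<phi>_def by auto
    next
      case 2 then show ?thesis using Y1 False by blast
    next
      case 3
      then have "v \<notin> X" using VXY by auto
      have iu: "i u = 0 \<or> i u = 1" using ib[OF 3(1)] by auto
      then show ?thesis using 3 key[of u v] kY1[of v] \<open>v \<notin> X\<close> unfolding P3E \<phi>_def by auto
    next
      case 4
      then have "u \<notin> X" using VXY by auto
      moreover have "E u v \<longleftrightarrow> E v u" using sym by blast
      moreover have iu: "i v = 0 \<or> i v = 1" using ib[OF 4(2)] by auto
      ultimately show ?thesis using 4 key[of v u] kY1[of u] unfolding P3E \<phi>_def by auto
    qed
  qed
  show ?thesis unfolding graph_iso_def bij_betw_def using inj img adj by blast
qed

lemma P4_ex:
  fixes V :: "'v set" and i k :: "'v \<Rightarrow> nat"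
  assumes g: "graph V E" and VXY: "V = X \<union> Y" "X \<inter> Y = {}"
    and cX: "\<And>x x'. x \<in> X \<Longrightarrow> x' \<in> X \<Longrightarrow> x \<noteq> x' \<Longrightarrow> E x x'"
    and cY: "\<And>y y'. y \<in> Y \<Longrightarrow> y' \<in> Y \<Longrightarrow> y \<noteq> y' \<Longrightarrow> E y y'"
    and iX: "i ` X = {..<s}" and kY: "1 \<in> k ` Y" "2 \<in> k ` Y"
    and key: "\<And>x y. x \<in> X \<Longrightarrow> y \<in> Y \<Longrightarrow> E x y \<longleftrightarrow> k y \<le> i x"
    and s2: "s \<ge> 2"
  shows "\<exists>a0 a1 a2 a3. P4pat V E a0 a1 a2 a3"
proof -
  have sym: "\<And>u v. E u v \<Longrightarrow> E v u" using g unfolding graph_def by blast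
  have "0 \<in> i ` X" "1 \<in> i ` X" using iX s2 by auto
  then obtain x0 x1 where x: "x0 \<in> X" "i x0 = 0" "x1 \<in> X" "i x1 = 1" by (metis imageE)
  obtain y1 y2 where y: "y1 \<in> Y" "k y1 = 1" "y2 \<in> Y" "k y2 = 2" using kY by (metis imageE)
  have d: "x0 \<noteq> x1" "y1 \<noteq> y2" "x0 \<noteq> y1" "x0 \<noteq> y2" "x1 \<noteq> y2" using x y VXY by auto
  have "P4pat V E x0 x1 y1 y2" unfolding P4pat_def
    using x y d VXY cX cY key[of x0 y1] key[of x0 y2] key[of x1 y1] key[of x1 y2] by auto
  then show ?thesis by blast
qed


context cg begin

lemma raft_structure:
  assumes fr: "freeG V E" and tw: "\<not> has_true_twins V E" and c2: "card V \<ge> 2"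
  shows "((\<exists>n\<ge>1. graph_iso V E (raft_V n) (raft_E n)) \<or> (\<exists>n. graph_iso V E (raftK1_V n) (raftK1_E n)))
    \<and> (graph_iso V E P3_V P3_E \<or> (\<exists>a0 a1 a2 a3. P4pat V E a0 a1 a2 a3))"
proof -
  obtain X Y p where VXY: "V = X \<union> Y" "X \<inter> Y = {}" and Yne: "Y \<noteq> {}" and pX: "p \<in> X"
    and pY: "\<And>y. y \<in> Y \<Longrightarrow> \<not> E p y"
    and cX: "\<And>x x'. x \<in> X \<Longrightarrow> x' \<in> X \<Longrightarrow> x \<noteq> x' \<Longrightarrow> E x x'"
    and cY: "\<And>y y'. y \<in> Y \<Longrightarrow> y' \<in> Y \<Longrightarrow> y \<noteq> y' \<Longrightarrow> E y y'"
    using cobip[OF fr tw c2] by blast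
  have XV: "X \<subseteq> V" and YV: "Y \<subseteq> V" using VXY by auto
  have finX: "finite X" and finY: "finite Y" using fin VXY by auto
  define f where "f x = {y \<in> Y. E x y}" for x
  have chain: "f x \<subseteq> f x' \<or> f x' \<subseteq> f x" if xx: "x \<in> X" "x' \<in> X" for x x'
  proof (rule ccontr)
    assume "\<not> ?thesis"
    then obtain y y' where y: "y \<in> Y" "E x y" "\<not> E x' y" "y' \<in> Y" "E x' y'" "\<not> E x y'"
      unfolding f_def by blast
    have ne: "x \<noteq> x'" "y \<noteq> y'" "x \<noteq> y'" "y \<noteq> x'" using y VXY xx by auto
    have "C4pat V E x y y' x'" unfolding C4pat_def
      using xx y ne XV YV cX[of x x'] cY[of y y'] sym by auto
    then show False using freeD(2)[OF fr] by metis
  qed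
  have twinX: "x = x'" if xx: "x \<in> X" "x' \<in> X" "f x = f x'" for x x'
  proof -
    have "closed_nbhd V E x = closed_nbhd V E x'"
    proof -
      have "(w = x \<or> E x w) \<longleftrightarrow> (w = x' \<or> E x' w)" if w: "w \<in> V" for w
      proof (cases "w \<in> X")
        case True then show ?thesis using cX xx by blast
      next
        case False
        then have "w \<in> Y" "w \<noteq> x" "w \<noteq> x'" using w VXY xx by auto
        then show ?thesis using xx(3) unfolding f_def by blast
      qed
      then show ?thesis unfolding closed_nbhd_def by blast
    qed
    then show ?thesis using tw xx XV unfolding has_true_twins_def by blast
  qed
  define i where "i x = card {x' \<in> X. f x' \<subset> f x}" for x
  define k where "k y = card {x \<in> X. \<not> E x y}" for y
  define s where "s = card X"
  have key: "E x y \<longleftrightarrow> k y \<le> i x" if xy: "x \<in> X" "y \<in> Y" for x y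
  proof
    assume e: "E x y"
    have "{x' \<in> X. \<not> E x' y} \<subseteq> {x' \<in> X. f x' \<subset> f x}"
    proof
      fix x' assume "x' \<in> {x' \<in> X. \<not> E x' y}"
      then have x': "x' \<in> X" "\<not> E x' y" by auto
      have "y \<in> f x" "y \<notin> f x'" using e x' xy unfolding f_def by auto
      then show "x' \<in> {x' \<in> X. f x' \<subset> f x}" using chain[OF xy(1) x'(1)] x' by auto
    qed
    then show "k y \<le> i x" unfolding k_def i_def using finX by (intro card_mono) auto
  next
    assume le: "k y \<le> i x"
    show "E x y"
    proof (rule ccontr)
      assume ne: "\<not> E x y"
      have "{x' \<in> X. f x' \<subset> f x} \<subseteq> {x' \<in> X. \<not> E x' y} - {x}"
      proof
        fix x' assume "x' \<in> {x' \<in> X. f x' \<subset> f x}"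
        then have x': "x' \<in> X" "f x' \<subset> f x" by auto
        have "y \<notin> f x" using ne unfolding f_def by auto
        then have "y \<notin> f x'" using x' by auto
        then show "x' \<in> {x' \<in> X. \<not> E x' y} - {x}" using x' xy unfolding f_def by auto
      qed
      then have "i x \<le> card ({x' \<in> X. \<not> E x' y} - {x})" unfolding i_def using finX by (intro card_mono) auto
      also have "\<dots> < k y" unfolding k_def using finX xy ne by (intro psubset_card_mono) auto
      finally show False using le by simp
    qed
  qed
  have ilt: "i x < i x'" if xx: "x \<in> X" "x' \<in> X" "f x \<subset> f x'" for x x'
  proof -
    have "insert x {z \<in> X. f z \<subset> f x} \<subseteq> {z \<in> X. f z \<subset> f x'}" using xx by auto
    then have "card (insert x {z \<in> X. f z \<subset> f x}) \<le> i x'" unfolding i_def using finX by (intro card_mono) auto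
    moreover have "card (insert x {z \<in> X. f z \<subset> f x}) = Suc (i x)" unfolding i_def using finX by simp
    ultimately show ?thesis by simp
  qed
  have iinj: "inj_on i X"
  proof (rule inj_onI)
    fix x x' assume xx: "x \<in> X" "x' \<in> X" "i x = i x'"
    show "x = x'"
    proof (rule ccontr)
      assume "x \<noteq> x'"
      then have "f x \<noteq> f x'" using twinX xx by blast
      then have "f x \<subset> f x' \<or> f x' \<subset> f x" using chain[OF xx(1,2)] by auto
      then show False using ilt xx by fastforce
    qed
  qed
  have ib: "i x < s" if "x \<in> X" for x
  proof -
    have "{x' \<in> X. f x' \<subset> f x} \<subset> X" using that by auto
    then show ?thesis unfolding i_def s_def using finX by (intro psubset_card_mono) auto
  qed
  have iimg: "i ` X = {..<s}"
  proof (rule card_subset_eq)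
    show "finite {..<s}" by simp
    show "i ` X \<subseteq> {..<s}" using ib by auto
    show "card (i ` X) = card {..<s}" using card_image[OF iinj] unfolding s_def by simp
  qed
  have kb: "1 \<le> k y \<and> k y \<le> s" if "y \<in> Y" for y
  proof
    have "p \<in> {x \<in> X. \<not> E x y}" using pX pY that by auto
    then show "1 \<le> k y" unfolding k_def using finX by (metis (no_types, lifting) One_nat_def Suc_leI card_gt_0_iff empty_iff finite_subset mem_Collect_eq subsetI)
    show "k y \<le> s" unfolding k_def s_def using finX by (intro card_mono) auto
  qed
  have kinj: "inj_on k Y"
  proof (rule inj_onI)
    fix y y' assume yy: "y \<in> Y" "y' \<in> Y" "k y = k y'"
    have "closed_nbhd V E y = closed_nbhd V E y'"
    proof -
      have "(w = y \<or> E y w) \<longleftrightarrow> (w = y' \<or> E y' w)" if w: "w \<in> V" for w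
      proof (cases "w \<in> Y")
        case True then show ?thesis using cY yy by blast
      next
        case False
        then have wX: "w \<in> X" "w \<noteq> y" "w \<noteq> y'" using w VXY yy by auto
        have "E y w \<longleftrightarrow> E w y" "E y' w \<longleftrightarrow> E w y'" using sym by blast+
        then show ?thesis using key[OF wX(1) yy(1)] key[OF wX(1) yy(2)] yy(3) wX by auto
      qed
      then show ?thesis unfolding closed_nbhd_def by blast
    qed
    then show "y = y'" using tw yy YV unfolding has_true_twins_def by blast
  qed
  have ksurj: "j \<in> k ` Y" if j: "1 \<le> j" "j < s" for j
  proof -
    have "j \<in> i ` X" "j - 1 \<in> i ` X" using iimg j by auto
    then obtain x x' where x: "x \<in> X" "i x = j" and x': "x' \<in> X" "i x' = j - 1" by auto
    have "x \<noteq> x'" using x x' j by auto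
    then have "f x \<noteq> f x'" using twinX x(1) x'(1) by blast
    moreover have "\<not> f x \<subset> f x'"
    proof
      assume "f x \<subset> f x'"
      then have "i x < i x'" using ilt[OF x(1) x'(1)] by blast
      then show False using x x' by simp
    qed
    ultimately have "f x' \<subset> f x" using chain[OF x(1) x'(1)] by auto
    then obtain y where y: "y \<in> Y" "E x y" "\<not> E x' y" unfolding f_def by blast
    have "k y \<le> j" "\<not> k y \<le> j - 1" using key[OF x(1) y(1)] key[OF x'(1) y(1)] y x x' by auto
    then have "k y = j" by linarith
    then show ?thesis using y by blast
  qed
  have s2: "s \<ge> 2"
  proof -
    obtain y where y: "y \<in> Y" using Yne by blast
    have "s \<noteq> 0" using pX finX unfolding s_def by auto
    moreover have "s \<noteq> 1"
    proof
      assume s1: "s = 1"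
      then have X1: "X = {p}" using pX finX unfolding s_def by (metis card_1_singletonE singletonD)
      have nop: "\<not> E p w" for w
      proof
        assume "E p w"
        then have "w \<in> V" "w \<noteq> p" using dom irr by auto
        then show False using \<open>E p w\<close> pY X1 VXY by auto
      qed
      have "E\<^sup>*\<^sup>* p y" using conn pX y XV YV unfolding connected_graph_def by blast
      then have "p = y" by (cases rule: converse_rtranclpE) (auto simp: nop)
      then show False using pX y VXY by auto
    qed
    ultimately show ?thesis by simp
  qed
  show ?thesis
  proof (cases "s \<in> k ` Y")
    case True
    have kimg: "k ` Y = {1..s}"
    proof
      show "k ` Y \<subseteq> {1..s}" using kb by auto
      show "{1..s} \<subseteq> k ` Y" using ksurj True by (auto simp: le_less)
    qed
    have iso: "graph_iso V E (raft_V (s - 1)) (raft_E (s - 1))"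
      by (rule iso_A[OF g VXY cX cY iinj iimg kinj kimg key s2])
    have "\<exists>a0 a1 a2 a3. P4pat V E a0 a1 a2 a3"
      by (rule P4_ex[OF g VXY cX cY iimg _ _ key s2]) (use kimg s2 in auto)
    moreover have "s - 1 \<ge> 1" using s2 by simp
    ultimately show ?thesis using iso by blast
  next
    case False
    have kimg: "k ` Y = {1..<s}"
    proof
      show "k ` Y \<subseteq> {1..<s}" using kb False by (force simp: le_less)
      show "{1..<s} \<subseteq> k ` Y" using ksurj by auto
    qed
    have iso: "graph_iso V E (raftK1_V (s - 2)) (raftK1_E (s - 2))"
      by (rule iso_B[OF g VXY cX cY iinj iimg kinj kimg key s2])
    show ?thesis
    proof (cases "s = 2")
      case True
      have "graph_iso V E P3_V P3_E"
        by (rule iso_P3[OF g VXY cX iinj _ kinj _ key]) (use iimg kimg True in auto)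
      then show ?thesis using iso by blast
    next
      case F2: False
      have "\<exists>a0 a1 a2 a3. P4pat V E a0 a1 a2 a3"
        by (rule P4_ex[OF g VXY cX cY iimg _ _ key s2]) (use kimg s2 F2 in auto)
      then show ?thesis using iso by blast
    qed
  qed
qed

end

lemma (in cg) P3_exists:
  assumes tw: "\<not> has_true_twins V E" and c2: "card V \<ge> 2"
  shows "\<exists>a b c. P3pat V E a b c"
proof -
  have "\<exists>u w. u \<in> V \<and> w \<in> V \<and> u \<noteq> w \<and> \<not> E u w"
  proof (rule ccontr)
    assume "\<not> ?thesis"
    then have adj: "\<And>u w. u \<in> V \<Longrightarrow> w \<in> V \<Longrightarrow> u \<noteq> w \<Longrightarrow> E u w" by blast
    obtain u w where uw: "u \<in> V" "w \<in> V" "u \<noteq> w" using two_vertices c2 by blast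
    have "closed_nbhd V E u = closed_nbhd V E w"
      unfolding closed_nbhd_def using adj uw by auto
    then show False using tw uw unfolding has_true_twins_def by blast
  qed
  then obtain u w where uw: "u \<in> V" "w \<in> V" "u \<noteq> w" "\<not> E u w" by blast
  have "dist u w \<noteq> 0" using dist_0 uw by blast
  moreover have "dist u w \<noteq> 1" using dist_1 uw by blast
  ultimately obtain m where m: "dist u w = Suc (Suc m)" by (metis One_nat_def not0_implies_Suc)
  obtain v1 where v1: "E u v1" "v1 \<in> V" "dist v1 w = Suc m" using dist_step[OF uw(1,2) m] by blast
  obtain v2 where v2: "E v1 v2" "v2 \<in> V" "dist v2 w = m" using dist_step[OF v1(2) uw(2) v1(3)] by blast
  have "\<not> E u v2" "u \<noteq> v2" using far[OF uw(1) v2(2) uw(2)] m v2 by auto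
  then have "P3pat V E u v1 v2" unfolding P3pat_def using uw v1 v2 by blast
  then show ?thesis by blast
qed

lemma free_of_prod:
  assumes G: "graph VG EG" and H: "graph VH EH"
    and O: "one_perfect_orientation (strong_prod_E VG EG VH EH) D"
    and P: "P3pat VG EG a0 a1 a2"
  shows "freeG VH EH"
proof -
  have A: "a0 \<in> VG" "a1 \<in> VG" "a2 \<in> VG" "EG a0 a1" "\<not> EG a0 a2" "a0 \<noteq> a2" "EG a1 a2"
    using P unfolding P3pat_def by auto
  note o = obs_claw[OF G H O A] obs_C4[OF G H O A] obs_bull[OF G H O A] obs_P5[OF G H O A] obs_C5[OF G H O A]
  show ?thesis unfolding freeG_def
  proof (intro conjI allI notI)
    fix b0 b1 b2 b3 assume "clawpat VH EH b0 b1 b2 b3"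
    then show False using o(1)[of b0 b1 b2 b3] unfolding clawpat_def by blast
  next
    fix b0 b1 b2 b3 assume "C4pat VH EH b0 b1 b2 b3"
    then show False using o(2)[of b0 b1 b2 b3] unfolding C4pat_def by blast
  next
    fix b0 b1 b2 b3 b4 assume "bullpat VH EH b0 b1 b2 b3 b4"
    then show False using o(3)[of b0 b1 b2 b3 b4] unfolding bullpat_def by blast
  next
    fix b0 b1 b2 b3 b4 assume "P5pat VH EH b0 b1 b2 b3 b4"
    then show False using o(4)[of b0 b1 b2 b3 b4] unfolding P5pat_def by blast
  next
    fix b0 b1 b2 b3 b4 assume "C5pat VH EH b0 b1 b2 b3 b4"
    then show False using o(5)[of b0 b1 b2 b3 b4] unfolding C5pat_def by blast
  qed
qed

theorem lemma21:
  fixes VG :: "'a set" and EG :: "'a \<Rightarrow> 'a \<Rightarrow> bool"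
    and VH :: "'b set" and EH :: "'b \<Rightarrow> 'b \<Rightarrow> bool"
  assumes "graph VG EG" and "graph VH EH"
    and "connected_graph VG EG" and "connected_graph VH EH"
    and "card VG \<ge> 2" and "card VH \<ge> 2"
    and "\<not> has_true_twins VG EG" and "\<not> has_true_twins VH EH"
  shows "one_perfectly_orientable (strong_prod_E VG EG VH EH) \<longleftrightarrow>
    ((graph_iso VG EG P3_V P3_E \<and>
       ((\<exists>n\<ge>1. graph_iso VH EH (raft_V n) (raft_E n)) \<or>
        (\<exists>n. graph_iso VH EH (raftK1_V n) (raftK1_E n)))) \<or>
     (graph_iso VH EH P3_V P3_E \<and>
       ((\<exists>n\<ge>1. graph_iso VG EG (raft_V n) (raft_E n)) \<or>
        (\<exists>n. graph_iso VG EG (raftK1_V n) (raftK1_E n)))))"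
proof
  interpret cG: cg VG EG using assms(1,3) by unfold_locales
  interpret cH: cg VH EH using assms(2,4) by unfold_locales
  assume opo: "one_perfectly_orientable (strong_prod_E VG EG VH EH)"
  then obtain D where O: "one_perfect_orientation (strong_prod_E VG EG VH EH) D"
    unfolding one_perfectly_orientable_def by blast
  have "one_perfectly_orientable (strong_prod_E VH EH VG EG)" by (rule opo_swap[OF opo])
  then obtain D' where O': "one_perfect_orientation (strong_prod_E VH EH VG EG) D'"
    unfolding one_perfectly_orientable_def by blast
  obtain a0 a1 a2 where PG: "P3pat VG EG a0 a1 a2" using cG.P3_exists assms(7,5) by blast
  obtain b0 b1 b2 where PH: "P3pat VH EH b0 b1 b2" using cH.P3_exists assms(8,6) by blast
  have fH: "freeG VH EH" by (rule free_of_prod[OF assms(1,2) O PG])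
  have fG: "freeG VG EG" by (rule free_of_prod[OF assms(2,1) O' PH])
  note SG = cG.raft_structure[OF fG assms(7,5)]
  note SH = cH.raft_structure[OF fH assms(8,6)]
  show "(graph_iso VG EG P3_V P3_E \<and>
       ((\<exists>n\<ge>1. graph_iso VH EH (raft_V n) (raft_E n)) \<or>
        (\<exists>n. graph_iso VH EH (raftK1_V n) (raftK1_E n)))) \<or>
     (graph_iso VH EH P3_V P3_E \<and>
       ((\<exists>n\<ge>1. graph_iso VG EG (raft_V n) (raft_E n)) \<or>
        (\<exists>n. graph_iso VG EG (raftK1_V n) (raftK1_E n))))"
  proof (cases "graph_iso VG EG P3_V P3_E")
    case True then show ?thesis using SH by blast
  next
    case nG: False
    show ?thesis
    proof (cases "graph_iso VH EH P3_V P3_E")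
      case True then show ?thesis using SG by blast
    next
      case nH: False
      obtain c0 c1 c2 c3 where c: "P4pat VG EG c0 c1 c2 c3" using SG nG by blast
      obtain d0 d1 d2 d3 where d: "P4pat VH EH d0 d1 d2 d3" using SH nH by blast
      show ?thesis using obs_P4P4[OF assms(1,2) O, of c0 c1 c2 c3 d0 d1 d2 d3] c d
        unfolding P4pat_def by blast
    qed
  qed
next
  assume h: "(graph_iso VG EG P3_V P3_E \<and>
       ((\<exists>n\<ge>1. graph_iso VH EH (raft_V n) (raft_E n)) \<or>
        (\<exists>n. graph_iso VH EH (raftK1_V n) (raftK1_E n)))) \<or>
     (graph_iso VH EH P3_V P3_E \<and>
       ((\<exists>n\<ge>1. graph_iso VG EG (raft_V n) (raft_E n)) \<or>
        (\<exists>n. graph_iso VG EG (raftK1_V n) (raftK1_E n))))"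
  show "one_perfectly_orientable (strong_prod_E VG EG VH EH)"
  proof (cases "graph_iso VG EG P3_V P3_E \<and>
       ((\<exists>n\<ge>1. graph_iso VH EH (raft_V n) (raft_E n)) \<or>
        (\<exists>n. graph_iso VH EH (raftK1_V n) (raftK1_E n)))")
    case True
    then have iG: "graph_iso VG EG P3_V P3_E" by blast
    from True show ?thesis
    proof (elim conjE disjE exE)
      fix n assume "graph_iso VH EH (raft_V n) (raft_E n)"
      then show ?thesis using opo_iso[OF P3_raft_opo iG] by blast
    next
      fix n assume "graph_iso VH EH (raftK1_V n) (raftK1_E n)"
      then show ?thesis using opo_iso[OF P3_raftK1_opo iG] by blast
    qed
  next
    case False
    then have R: "graph_iso VH EH P3_V P3_E \<and>
       ((\<exists>n\<ge>1. graph_iso VG EG (raft_V n) (raft_E n)) \<or>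
        (\<exists>n. graph_iso VG EG (raftK1_V n) (raftK1_E n)))" using h by blast
    then have iH: "graph_iso VH EH P3_V P3_E" by blast
    have "one_perfectly_orientable (strong_prod_E VH EH VG EG)"
      using R
    proof (elim conjE disjE exE)
      fix n assume "graph_iso VG EG (raft_V n) (raft_E n)"
      then show ?thesis using opo_iso[OF P3_raft_opo iH] by blast
    next
      fix n assume "graph_iso VG EG (raftK1_V n) (raftK1_E n)"
      then show ?thesis using opo_iso[OF P3_raftK1_opo iH] by blast
    qed
    then show ?thesis by (rule opo_swap)
  qed
qed


end
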